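(* Let $G$ be a finite simple connected graph with no $K_5$ minor, not isomorphic to $C_5$, that has no dynamic $4$-coloring, and suppose $G$ has the minimum number of edges among all such graphs (i.e., every finite simple connected graph with no $K_5$ minor, not isomorphic to $C_5$, and with fewer edges than $G$ is dynamically $4$-colorable). Then $G$ is internally $3$-connected.
   Context: All graphs are finite and simple. Given a proper vertex coloring of a graph, a vertex $v$ is happy if either $v$ has at most one neighbor or $v$ has two neighbors receiving distinct colors. A dynamic $4$-coloring is a proper vertex coloring with at most $4$ colors in which every vertex is happy. A separation of $G$ is a pair $(A,B)$ of subsets of $V(G)$ with $A\cup B=V(G)$, $A\setminus B\neq\emptyset$, $B\setminus A\neq\emptyset$, and no edge between $A\setminus B$ and $B\setminus A$; its order is $|A\cap B|$. A graph $G$ is internally $k$-connected if $|V(G)|>k$, $G$ is $(k-1)$-connected, and for every separation $(A,B)$ of order $k-1$, either $|A\setminus B|=1$ or $|B\setminus A|=1$. *)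

theory Defs
  imports Main
begin

definition simple_graph :: "'a set \<Rightarrow> ('a \<Rightarrow> 'a \<Rightarrow> bool) \<Rightarrow> bool" where
  "simple_graph V E \<longleftrightarrow> finite V \<and> (\<forall>u v. E u v \<longrightarrow> u \<in> V \<and> v \<in> V \<and> u \<noteq> v \<and> E v u)"

definition edge_set :: "'a set \<Rightarrow> ('a \<Rightarrow> 'a \<Rightarrow> bool) \<Rightarrow> 'a set set" where
  "edge_set V E = {{u, v} | u v. u \<in> V \<and> v \<in> V \<and> E u v}"

definition num_edges :: "'a set \<Rightarrow> ('a \<Rightarrow> 'a \<Rightarrow> bool) \<Rightarrow> nat" where
  "num_edges V E = card (edge_set V E)"

definition neighbors :: "'a set \<Rightarrow> ('a \<Rightarrow> 'a \<Rightarrow> bool) \<Rightarrow> 'a \<Rightarrow> 'a set" where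
  "neighbors V E v = {u \<in> V. E v u}"

definition connected_on :: "'a set \<Rightarrow> ('a \<Rightarrow> 'a \<Rightarrow> bool) \<Rightarrow> bool" where
  "connected_on S E \<longleftrightarrow> S \<noteq> {} \<and>
     (\<forall>u\<in>S. \<forall>v\<in>S. (\<lambda>x y. x \<in> S \<and> y \<in> S \<and> E x y)\<^sup>*\<^sup>* u v)"

definition connected_graph :: "'a set \<Rightarrow> ('a \<Rightarrow> 'a \<Rightarrow> bool) \<Rightarrow> bool" where
  "connected_graph V E \<longleftrightarrow> connected_on V E"

definition has_K5_minor :: "'a set \<Rightarrow> ('a \<Rightarrow> 'a \<Rightarrow> bool) \<Rightarrow> bool" where
  "has_K5_minor V E \<longleftrightarrow> (\<exists>B :: nat \<Rightarrow> 'a set.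
     (\<forall>i<5. B i \<subseteq> V \<and> connected_on (B i) E) \<and>
     (\<forall>i<5. \<forall>j<5. i \<noteq> j \<longrightarrow> B i \<inter> B j = {} \<and> (\<exists>u\<in>B i. \<exists>v\<in>B j. E u v)))"

definition iso_C5 :: "'a set \<Rightarrow> ('a \<Rightarrow> 'a \<Rightarrow> bool) \<Rightarrow> bool" where
  "iso_C5 V E \<longleftrightarrow> (\<exists>f :: nat \<Rightarrow> 'a. bij_betw f {0..<5} V \<and>
     (\<forall>i<5. \<forall>j<5. E (f i) (f j) \<longleftrightarrow> (j = (i + 1) mod 5 \<or> i = (j + 1) mod 5)))"

definition proper_coloring :: "'a set \<Rightarrow> ('a \<Rightarrow> 'a \<Rightarrow> bool) \<Rightarrow> ('a \<Rightarrow> nat) \<Rightarrow> bool" where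
  "proper_coloring V E c \<longleftrightarrow> (\<forall>u\<in>V. \<forall>v\<in>V. E u v \<longrightarrow> c u \<noteq> c v)"

definition happy :: "'a set \<Rightarrow> ('a \<Rightarrow> 'a \<Rightarrow> bool) \<Rightarrow> ('a \<Rightarrow> nat) \<Rightarrow> 'a \<Rightarrow> bool" where
  "happy V E c v \<longleftrightarrow> card (neighbors V E v) \<le> 1 \<or>
     (\<exists>u\<in>neighbors V E v. \<exists>w\<in>neighbors V E v. c u \<noteq> c w)"

definition dynamic_4_coloring :: "'a set \<Rightarrow> ('a \<Rightarrow> 'a \<Rightarrow> bool) \<Rightarrow> ('a \<Rightarrow> nat) \<Rightarrow> bool" where
  "dynamic_4_coloring V E c \<longleftrightarrow> (\<forall>v\<in>V. c v < 4) \<and> proper_coloring V E c \<and> (\<forall>v\<in>V. happy V E c v)"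

definition dynamically_4_colorable :: "'a set \<Rightarrow> ('a \<Rightarrow> 'a \<Rightarrow> bool) \<Rightarrow> bool" where
  "dynamically_4_colorable V E \<longleftrightarrow> (\<exists>c. dynamic_4_coloring V E c)"

definition separation :: "'a set \<Rightarrow> ('a \<Rightarrow> 'a \<Rightarrow> bool) \<Rightarrow> 'a set \<Rightarrow> 'a set \<Rightarrow> bool" where
  "separation V E A B \<longleftrightarrow> A \<union> B = V \<and> A - B \<noteq> {} \<and> B - A \<noteq> {} \<and>
     (\<forall>u\<in>A - B. \<forall>v\<in>B - A. \<not> E u v)"

definition k_connected :: "nat \<Rightarrow> 'a set \<Rightarrow> ('a \<Rightarrow> 'a \<Rightarrow> bool) \<Rightarrow> bool" where
  "k_connected k V E \<longleftrightarrow> card V > k \<and>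
     (\<forall>X \<subseteq> V. card X < k \<longrightarrow> connected_on (V - X) E)"

definition internally_k_connected :: "nat \<Rightarrow> 'a set \<Rightarrow> ('a \<Rightarrow> 'a \<Rightarrow> bool) \<Rightarrow> bool" where
  "internally_k_connected k V E \<longleftrightarrow> card V > k \<and> k_connected (k - 1) V E \<and>
     (\<forall>A B. separation V E A B \<and> card (A \<inter> B) = k - 1 \<longrightarrow>
        card (A - B) = 1 \<or> card (B - A) = 1)"

end

theory Submission
  imports Defs
begin

definition rel_on :: "'a set \<Rightarrow> ('a \<Rightarrow> 'a \<Rightarrow> bool) \<Rightarrow> 'a \<Rightarrow> 'a \<Rightarrow> bool" where
  "rel_on S F = (\<lambda>x y. x \<in> S \<and> y \<in> S \<and> F x y)"

definition symm :: "('a \<Rightarrow> 'a \<Rightarrow> bool) \<Rightarrow> bool" where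
  "symm F \<longleftrightarrow> (\<forall>u v. F u v \<longrightarrow> F v u)"

lemma connected_on_alt:
  "connected_on S F \<longleftrightarrow> S \<noteq> {} \<and> (\<forall>u\<in>S. \<forall>v\<in>S. (rel_on S F)\<^sup>*\<^sup>* u v)"
  by (simp add: connected_on_def rel_on_def)

lemma rtranclp_sym:
  assumes "\<And>u v. R u v \<Longrightarrow> R v u" and "R\<^sup>*\<^sup>* a b" shows "R\<^sup>*\<^sup>* b a"
  using assms(2) by induction (auto intro: converse_rtranclp_into_rtranclp assms(1))

lemma rel_on_sym: "symm F \<Longrightarrow> (rel_on S F)\<^sup>*\<^sup>* a b \<Longrightarrow> (rel_on S F)\<^sup>*\<^sup>* b a"
  by (rule rtranclp_sym[where R="rel_on S F"]) (auto simp: rel_on_def symm_def)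

lemma rel_on_mono:
  assumes "(rel_on S F)\<^sup>*\<^sup>* a b" "S \<subseteq> T" "\<And>u v. u \<in> S \<Longrightarrow> v \<in> S \<Longrightarrow> F u v \<Longrightarrow> F' u v"
  shows "(rel_on T F')\<^sup>*\<^sup>* a b"
  using assms(1)
proof (induction rule: rtranclp_induct)
  case base then show ?case by simp
next
  case (step y z)
  then have "rel_on T F' y z" using assms(2,3) by (auto simp: rel_on_def)
  with step show ?case by (meson rtranclp.rtrancl_into_rtrancl)
qed

lemma rel_on_in: "(rel_on S F)\<^sup>*\<^sup>* a b \<Longrightarrow> a \<in> S \<Longrightarrow> b \<in> S"
  by (induction rule: rtranclp_induct) (auto simp: rel_on_def)

lemma conn_root:
  assumes "r \<in> S" "\<And>v. v \<in> S \<Longrightarrow> (rel_on S F)\<^sup>*\<^sup>* r v" "symm F"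
  shows "connected_on S F"
  unfolding connected_on_alt
proof (intro conjI ballI)
  show "S \<noteq> {}" using assms(1) by auto
  fix u v assume "u \<in> S" "v \<in> S"
  have "(rel_on S F)\<^sup>*\<^sup>* u r" using assms(2)[OF \<open>u\<in>S\<close>] rel_on_sym[OF assms(3)] by blast
  then show "(rel_on S F)\<^sup>*\<^sup>* u v" using assms(2)[OF \<open>v\<in>S\<close>] by (meson rtranclp_trans)
qed

lemma conn_path: "connected_on S F \<Longrightarrow> u \<in> S \<Longrightarrow> v \<in> S \<Longrightarrow> (rel_on S F)\<^sup>*\<^sup>* u v"
  by (simp add: connected_on_alt)

lemma conn_mono_rel:
  assumes "connected_on S F" "\<And>u v. u \<in> S \<Longrightarrow> v \<in> S \<Longrightarrow> F u v \<Longrightarrow> F' u v"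
  shows "connected_on S F'"
  using assms(1) unfolding connected_on_alt
  by (auto intro: rel_on_mono[where S=S and T=S and F=F] assms(2))

lemma conn_single: "connected_on {a} F"
  by (simp add: connected_on_alt)

lemma conn_union_edge:
  assumes "connected_on S F" "connected_on T F" "s \<in> S" "t \<in> T" "F s t" "symm F"
  shows "connected_on (S \<union> T) F"
proof (rule conn_root[where r=s])
  show "s \<in> S \<union> T" using assms(3) by simp
  show "symm F" by fact
  fix v assume v: "v \<in> S \<union> T"
  show "(rel_on (S \<union> T) F)\<^sup>*\<^sup>* s v"
  proof (cases "v \<in> S")
    case True
    show ?thesis by (rule rel_on_mono[OF conn_path[OF assms(1) assms(3) True]]) auto
  next
    case False
    then have vT: "v \<in> T" using v by auto
    have 1: "(rel_on (S \<union> T) F)\<^sup>*\<^sup>* t v" by (rule rel_on_mono[OF conn_path[OF assms(2) assms(4) vT]]) auto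
    have "rel_on (S \<union> T) F s t" using assms by (auto simp: rel_on_def)
    then show ?thesis using 1 by (meson converse_rtranclp_into_rtranclp)
  qed
qed

lemma conn_union_int:
  assumes "connected_on S F" "connected_on T F" "r \<in> S" "r \<in> T" "symm F"
  shows "connected_on (S \<union> T) F"
proof (rule conn_root[where r=r])
  show "r \<in> S \<union> T" using assms by simp
  show "symm F" by fact
  fix v assume v: "v \<in> S \<union> T"
  then show "(rel_on (S \<union> T) F)\<^sup>*\<^sup>* r v"
  proof
    assume "v \<in> S" then show ?thesis by (rule rel_on_mono[OF conn_path[OF assms(1) assms(3)]]) auto
  next
    assume "v \<in> T" then show ?thesis by (rule rel_on_mono[OF conn_path[OF assms(2) assms(4)]]) auto
  qed
qed

definition reach :: "'a set \<Rightarrow> ('a \<Rightarrow> 'a \<Rightarrow> bool) \<Rightarrow> 'a \<Rightarrow> 'a set" where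
  "reach S F a = {b. (rel_on S F)\<^sup>*\<^sup>* a b}"

lemma reach_sub: "a \<in> S \<Longrightarrow> reach S F a \<subseteq> S"
  using rel_on_in by (fastforce simp: reach_def)

lemma reach_self: "a \<in> reach S F a"
  by (simp add: reach_def)

lemma reach_closed: "a \<in> S \<Longrightarrow> b \<in> reach S F a \<Longrightarrow> c \<in> S \<Longrightarrow> F b c \<Longrightarrow> c \<in> reach S F a"
proof -
  assume a: "a \<in> S" and b: "b \<in> reach S F a" and c: "c \<in> S" and bc: "F b c"
  have p: "(rel_on S F)\<^sup>*\<^sup>* a b" using b by (simp add: reach_def)
  have "b \<in> S" using rel_on_in[OF p a] .
  then have "rel_on S F b c" using c bc by (simp add: rel_on_def)
  with p show ?thesis by (simp add: reach_def)
qed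

lemma reach_conn:
  assumes "a \<in> S" "symm F" shows "connected_on (reach S F a) F"
proof (rule conn_root[where r=a])
  show "a \<in> reach S F a" by (rule reach_self)
  show "symm F" by fact
  fix v assume "v \<in> reach S F a"
  then have "(rel_on S F)\<^sup>*\<^sup>* a v" by (simp add: reach_def)
  then show "(rel_on (reach S F a) F)\<^sup>*\<^sup>* a v"
  proof (induction rule: rtranclp_induct)
    case base then show ?case by simp
  next
    case (step y z)
    have "y \<in> reach S F a" using step(1) by (simp add: reach_def)
    moreover have "z \<in> reach S F a" using rtranclp.rtrancl_into_rtrancl[OF step(1,2)] by (simp add: reach_def)
    ultimately have "rel_on (reach S F a) F y z" using step(2) by (simp add: rel_on_def)
    with step(3) show ?case by (rule rtranclp.rtrancl_into_rtrancl)
  qed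
qed

lemma edge_leaving:
  assumes "connected_on V F" "T \<subseteq> V" "T \<noteq> {}" "V - T \<noteq> {}"
  shows "\<exists>t\<in>T. \<exists>u\<in>V - T. F t u"
proof -
  obtain t0 u0 where t0: "t0 \<in> T" and u0: "u0 \<in> V - T" using assms by auto
  have "(rel_on V F)\<^sup>*\<^sup>* t0 u0" using conn_path[OF assms(1)] t0 u0 assms(2) by auto
  then have "u0 \<in> T \<or> (\<exists>t\<in>T. \<exists>u\<in>V - T. F t u)"
  proof (induction rule: rtranclp_induct)
    case base then show ?case using t0 by simp
  next
    case (step y z)
    then show ?case by (auto simp: rel_on_def)
  qed
  with u0 show ?thesis by auto
qed

lemma conn_nbr:
  assumes "connected_on S F" "u \<in> S" "v \<in> S" "u \<noteq> v"
  shows "\<exists>w\<in>S. w \<noteq> u \<and> F u w"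
  using edge_leaving[OF assms(1), of "{u}"] assms by auto

lemma leaf_remove:
  assumes conn: "connected_on S F" and x: "x \<in> S" and ne: "S \<noteq> {x}"
    and one: "\<And>z. z \<in> S \<Longrightarrow> F x z \<Longrightarrow> z = y" and sym: "symm F"
  shows "connected_on (S - {x}) F"
proof -
  obtain r where r: "r \<in> S" "r \<noteq> x" using ne x by auto
  show ?thesis
  proof (rule conn_root[where r=r])
    show "r \<in> S - {x}" using r by simp
    show "symm F" by fact
    fix v assume v: "v \<in> S - {x}"
    have "(rel_on S F)\<^sup>*\<^sup>* r v" using conn_path[OF conn r(1)] v by auto
    then have "(v \<noteq> x \<and> (rel_on (S - {x}) F)\<^sup>*\<^sup>* r v) \<or>
               (v = x \<and> y \<in> S - {x} \<and> (rel_on (S - {x}) F)\<^sup>*\<^sup>* r y)"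
    proof (induction rule: rtranclp_induct)
      case base then show ?case using r by simp
    next
      case (step b c)
      have bc: "b \<in> S" "c \<in> S" "F b c" using step(2) by (auto simp: rel_on_def)
      from step(3) show ?case
      proof
        assume h: "b \<noteq> x \<and> (rel_on (S - {x}) F)\<^sup>*\<^sup>* r b"
        show ?case
        proof (cases "c = x")
          case True
          then have "F x b" using bc sym by (auto simp: symm_def)
          then have "b = y" using one bc by auto
          then show ?thesis using h True bc by auto
        next
          case False
          then have "rel_on (S - {x}) F b c" using h bc by (auto simp: rel_on_def)
          then show ?thesis using h False by (meson rtranclp.rtrancl_into_rtrancl)
        qed
      next
        assume h: "b = x \<and> y \<in> S - {x} \<and> (rel_on (S - {x}) F)\<^sup>*\<^sup>* r y"
        then have "c = y" using one bc by auto
        then show ?case using h by auto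
      qed
    qed
    then show "(rel_on (S - {x}) F)\<^sup>*\<^sup>* r v" using v by auto
  qed
qed

lemma conn_image:
  assumes conn: "connected_on B F" and BH: "B \<subseteq> VH"
    and phi: "\<And>u. u \<in> VH \<Longrightarrow> connected_on (\<phi> u) E"
    and edge: "\<And>u v. u \<in> VH \<Longrightarrow> v \<in> VH \<Longrightarrow> F u v \<Longrightarrow> \<exists>p\<in>\<phi> u. \<exists>q\<in>\<phi> v. E p q"
    and sym: "symm E"
  shows "connected_on (\<Union>(\<phi> ` B)) E"
proof -
  obtain r where r: "r \<in> B" using conn by (auto simp: connected_on_alt)
  then obtain r' where r': "r' \<in> \<phi> r" using phi BH by (fastforce simp: connected_on_alt)
  let ?U = "\<Union>(\<phi> ` B)"
  have claim: "\<forall>q\<in>\<phi> v. (rel_on ?U E)\<^sup>*\<^sup>* r' q" if "(rel_on B F)\<^sup>*\<^sup>* r v" for v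
    using that
  proof (induction rule: rtranclp_induct)
    case base
    show ?case
    proof
      fix q assume "q \<in> \<phi> r"
      then have "(rel_on (\<phi> r) E)\<^sup>*\<^sup>* r' q" using phi[of r] BH r r' by (auto simp: connected_on_alt)
      then show "(rel_on ?U E)\<^sup>*\<^sup>* r' q" by (rule rel_on_mono) (use r in auto)
    qed
  next
    case (step v w)
    have vw: "v \<in> B" "w \<in> B" "F v w" using step(2) by (auto simp: rel_on_def)
    obtain p q0 where p: "p \<in> \<phi> v" and q0: "q0 \<in> \<phi> w" and pq: "E p q0"
      using edge[of v w] vw BH by auto
    show ?case
    proof
      fix q assume q: "q \<in> \<phi> w"
      have 1: "(rel_on ?U E)\<^sup>*\<^sup>* r' p" using step(3) p by auto
      have 2: "rel_on ?U E p q0" using p q0 pq vw by (auto simp: rel_on_def)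
      have "(rel_on (\<phi> w) E)\<^sup>*\<^sup>* q0 q" using phi[of w] BH vw q0 q by (auto simp: connected_on_alt)
      then have 3: "(rel_on ?U E)\<^sup>*\<^sup>* q0 q" by (rule rel_on_mono) (use vw in auto)
      from 1 2 3 show "(rel_on ?U E)\<^sup>*\<^sup>* r' q" by (meson rtranclp.rtrancl_into_rtrancl rtranclp_trans)
    qed
  qed
  show ?thesis
  proof (rule conn_root[where r=r'])
    show "r' \<in> ?U" using r r' by auto
    show "symm E" by fact
    fix x assume "x \<in> ?U"
    then obtain v where v: "v \<in> B" "x \<in> \<phi> v" by auto
    have "(rel_on B F)\<^sup>*\<^sup>* r v" using conn r v by (auto simp: connected_on_alt)
    then show "(rel_on ?U E)\<^sup>*\<^sup>* r' x" using claim v by auto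
  qed
qed

lemma minor_map:
  assumes K: "has_K5_minor VH F"
    and phi: "\<And>u. u \<in> VH \<Longrightarrow> \<phi> u \<subseteq> V \<and> connected_on (\<phi> u) E"
    and disj: "\<And>u v. u \<in> VH \<Longrightarrow> v \<in> VH \<Longrightarrow> u \<noteq> v \<Longrightarrow> \<phi> u \<inter> \<phi> v = {}"
    and edge: "\<And>u v. u \<in> VH \<Longrightarrow> v \<in> VH \<Longrightarrow> F u v \<Longrightarrow> \<exists>p\<in>\<phi> u. \<exists>q\<in>\<phi> v. E p q"
    and sym: "symm E"
  shows "has_K5_minor V E"
proof -
  obtain B :: "nat \<Rightarrow> _" where
    B1: "\<forall>i<5. B i \<subseteq> VH \<and> connected_on (B i) F" and
    B2: "\<forall>i<5. \<forall>j<5. i \<noteq> j \<longrightarrow> B i \<inter> B j = {} \<and> (\<exists>u\<in>B i. \<exists>v\<in>B j. F u v)"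
    using K unfolding has_K5_minor_def by blast
  define B' where "B' i = \<Union>(\<phi> ` B i)" for i
  have "\<forall>i<5. B' i \<subseteq> V \<and> connected_on (B' i) E"
  proof (intro allI impI conjI)
    fix i :: nat assume i: "i < 5"
    show "B' i \<subseteq> V" using B1 i phi unfolding B'_def by blast
    show "connected_on (B' i) E" unfolding B'_def
      by (rule conn_image[where VH=VH and F=F]) (use B1 i phi edge sym in auto)
  qed
  moreover have "\<forall>i<5. \<forall>j<5. i \<noteq> j \<longrightarrow> B' i \<inter> B' j = {} \<and> (\<exists>u\<in>B' i. \<exists>v\<in>B' j. E u v)"
  proof (intro allI impI conjI)
    fix i j :: nat assume ij: "i < 5" "j < 5" "i \<noteq> j"
    show "B' i \<inter> B' j = {}"
    proof (rule ccontr)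
      assume "B' i \<inter> B' j \<noteq> {}"
      then obtain p u v where "u \<in> B i" "v \<in> B j" "p \<in> \<phi> u" "p \<in> \<phi> v" unfolding B'_def by blast
      moreover have "u \<noteq> v" using B2 ij \<open>u \<in> B i\<close> \<open>v \<in> B j\<close> by blast
      ultimately show False using disj[of u v] B1 ij by blast
    qed
    obtain u v where uv: "u \<in> B i" "v \<in> B j" "F u v" using B2 ij by blast
    then obtain p q where "p \<in> \<phi> u" "q \<in> \<phi> v" "E p q" using edge[of u v] B1 ij by blast
    then show "\<exists>u\<in>B' i. \<exists>v\<in>B' j. E u v" using uv unfolding B'_def by blast
  qed
  ultimately show ?thesis unfolding has_K5_minor_def by blast
qed

lemma sg_all: "simple_graph H F \<Longrightarrow> F u v \<Longrightarrow> u \<in> H \<and> v \<in> H \<and> u \<noteq> v \<and> F v u"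
  unfolding simple_graph_def by (drule conjunct2) (drule spec, drule spec, erule mp)
lemma sg_finite: "simple_graph H F \<Longrightarrow> finite H"
  unfolding simple_graph_def by (erule conjunct1)
lemma sg_in1: "simple_graph H F \<Longrightarrow> F u v \<Longrightarrow> u \<in> H"
  by (drule (1) sg_all) (erule conjunct1)
lemma sg_in2: "simple_graph H F \<Longrightarrow> F u v \<Longrightarrow> v \<in> H"
  by (drule (1) sg_all) (elim conjE)
lemma sg_irr: "simple_graph H F \<Longrightarrow> F u v \<Longrightarrow> u \<noteq> v"
  by (drule (1) sg_all) (elim conjE)
lemma sg_sym: "simple_graph H F \<Longrightarrow> F u v \<Longrightarrow> F v u"
  by (drule (1) sg_all) (elim conjE)
lemma sg_symm: assumes "simple_graph H F" shows "symm F"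
  unfolding symm_def
proof (intro allI impI)
  fix u v assume "F u v" then show "F v u" by (rule sg_sym[OF assms])
qed
lemma sg_intro:
  assumes "finite H" and h: "\<And>u v. F u v \<Longrightarrow> u \<in> H \<and> v \<in> H \<and> u \<noteq> v \<and> F v u"
  shows "simple_graph H F"
proof -
  have "\<forall>u v. F u v \<longrightarrow> u \<in> H \<and> v \<in> H \<and> u \<noteq> v \<and> F v u"
  proof (intro allI impI)
    fix u v assume "F u v" then show "u \<in> H \<and> v \<in> H \<and> u \<noteq> v \<and> F v u" by (rule h)
  qed
  then show ?thesis unfolding simple_graph_def using assms(1) by (intro conjI)
qed

definition okcol :: "'a set \<Rightarrow> ('a \<Rightarrow> 'a \<Rightarrow> bool) \<Rightarrow> ('a \<Rightarrow> nat) \<Rightarrow> 'a set \<Rightarrow> bool" where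
  "okcol H F c U \<longleftrightarrow> (\<forall>v\<in>H. c v < 4) \<and> proper_coloring H F c \<and> (\<forall>v\<in>U. happy H F c v)"

lemma dyn_okcol: "dynamic_4_coloring H F c \<longleftrightarrow> okcol H F c H"
  by (simp add: dynamic_4_coloring_def okcol_def)

lemma colorable_okcol: "dynamically_4_colorable H F \<longleftrightarrow> (\<exists>c. okcol H F c H)"
  by (simp add: dynamically_4_colorable_def dyn_okcol)

definition perm4 :: "(nat \<Rightarrow> nat) \<Rightarrow> bool" where
  "perm4 p \<longleftrightarrow> (\<forall>t<4. p t < 4) \<and> (\<forall>s<4. \<forall>t<4. p s = p t \<longrightarrow> s = t)"

lemma happy_pair: "a \<in> H \<Longrightarrow> b \<in> H \<Longrightarrow> F u a \<Longrightarrow> F u b \<Longrightarrow> c a \<noteq> c b \<Longrightarrow> happy H F c u"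
  unfolding happy_def neighbors_def by blast

lemma happy_get_pair:
  assumes "happy H F c u" "finite H" "a \<in> H" "b \<in> H" "a \<noteq> b" "F u a" "F u b"
  shows "\<exists>p\<in>H. \<exists>q\<in>H. F u p \<and> F u q \<and> c p \<noteq> c q"
proof -
  have fin: "finite (neighbors H F u)" using assms(2) by (simp add: neighbors_def)
  have "\<not> card (neighbors H F u) \<le> 1"
    using assms(3-7) card_le_Suc0_iff_eq[OF fin] by (auto simp: neighbors_def)
  then show ?thesis using assms(1) unfolding happy_def neighbors_def by blast
qed

lemma okcol_perm:
  assumes "okcol H F c U" "perm4 p" shows "okcol H F (p \<circ> c) U"
  unfolding okcol_def
proof (intro conjI ballI)
  have c4: "\<forall>v\<in>H. c v < 4" and pr: "proper_coloring H F c" and hp: "\<forall>v\<in>U. happy H F c v"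
    using assms(1) by (auto simp: okcol_def)
  fix v assume "v \<in> H" then show "(p \<circ> c) v < 4" using c4 assms(2) by (auto simp: perm4_def)
next
  have c4: "\<forall>v\<in>H. c v < 4" and pr: "proper_coloring H F c"
    using assms(1) by (auto simp: okcol_def)
  show "proper_coloring H F (p \<circ> c)"
    using pr c4 assms(2) unfolding proper_coloring_def perm4_def by (metis comp_apply)
next
  have c4: "\<forall>v\<in>H. c v < 4" and hp: "\<forall>v\<in>U. happy H F c v"
    using assms(1) by (auto simp: okcol_def)
  fix v assume "v \<in> U"
  then have "happy H F c v" using hp by auto
  then show "happy H F (p \<circ> c) v"
    using c4 assms(2) unfolding happy_def neighbors_def perm4_def by (metis (no_types, lifting) comp_apply mem_Collect_eq)
qed

definition sw :: "nat \<Rightarrow> nat \<Rightarrow> nat \<Rightarrow> nat" where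
  "sw a b t = (if t = a then b else if t = b then a else t)"

lemma perm4_sw: "a < 4 \<Longrightarrow> b < 4 \<Longrightarrow> perm4 (sw a b)"
  unfolding perm4_def sw_def by (intro conjI allI impI) (simp_all split: if_splits)

lemma perm4_comp: assumes "perm4 p" "perm4 q" shows "perm4 (p \<circ> q)"
  unfolding perm4_def comp_def
proof (intro conjI allI impI)
  fix t :: nat assume "t < 4"
  then have "q t < 4" using assms(2) by (simp add: perm4_def)
  then show "p (q t) < 4" using assms(1) by (simp add: perm4_def)
next
  fix s t :: nat assume st: "s < 4" "t < 4" "p (q s) = p (q t)"
  have "q s < 4" "q t < 4" using st assms(2) by (simp_all add: perm4_def)
  then have "q s = q t" using st(3) assms(1) unfolding perm4_def by blast
  then show "s = t" using st assms(2) unfolding perm4_def by blast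
qed

lemma norm1: "a < 4 \<Longrightarrow> \<exists>p. perm4 p \<and> p a = 0"
  by (rule exI[of _ "sw a 0"]) (auto simp: perm4_sw sw_def)

lemma norm2:
  assumes "a < 4" "b < 4" "a \<noteq> b" shows "\<exists>p. perm4 p \<and> p a = 0 \<and> p b = 1"
proof -
  define q where "q = sw a 0"
  have q: "perm4 q" "q a = 0" "q b \<noteq> 0" "q b < 4" using assms by (auto simp: q_def sw_def perm4_sw)
  define r where "r = sw (q b) 1"
  have "perm4 (r \<circ> q)" using q by (auto simp: r_def intro!: perm4_comp perm4_sw)
  moreover have "(r \<circ> q) a = 0" "(r \<circ> q) b = 1" using q by (auto simp: r_def sw_def)
  ultimately show ?thesis by blast
qed

lemma norm3:
  assumes "a < 4" "b < 4" "d < 4" "a \<noteq> b" "a \<noteq> d" "b \<noteq> d"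
  shows "\<exists>p. perm4 p \<and> p a = 0 \<and> p b = 1 \<and> p d = 2"
proof -
  obtain q where q: "perm4 q" "q a = 0" "q b = 1" using norm2 assms by blast
  have qd: "q d < 4" "q d \<noteq> 0" "q d \<noteq> 1" using q assms unfolding perm4_def by metis+
  define r where "r = sw (q d) 2"
  have "perm4 (r \<circ> q)" using q qd by (auto simp: r_def intro!: perm4_comp perm4_sw)
  moreover have "(r \<circ> q) a = 0" "(r \<circ> q) b = 1" "(r \<circ> q) d = 2" using q qd by (auto simp: r_def sw_def)
  ultimately show ?thesis by blast
qed

definition rA :: "nat \<Rightarrow> nat" where "rA t = (if t = 1 then 2 else if t = 2 then 3 else if t = 3 then 1 else t)"
definition rB :: "nat \<Rightarrow> nat" where "rB t = (if t = 1 then 3 else if t = 2 then 1 else if t = 3 then 2 else t)"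

lemma lt4: "t < 4 \<Longrightarrow> t = 0 \<or> t = 1 \<or> t = 2 \<or> t = (3::nat)" by presburger
lemma perm4_rA: "perm4 rA"
  unfolding perm4_def
proof (intro conjI allI impI)
  fix t :: nat assume "t < 4" then show "rA t < 4" by (auto simp: rA_def)
next
  fix s t :: nat assume "s < 4" "t < 4" "rA s = rA t"
  then show "s = t" using lt4[of s] lt4[of t] by (auto simp: rA_def)
qed
lemma perm4_rB: "perm4 rB"
  unfolding perm4_def
proof (intro conjI allI impI)
  fix t :: nat assume "t < 4" then show "rB t < 4" by (auto simp: rB_def)
next
  fix s t :: nat assume "s < 4" "t < 4" "rB s = rB t"
  then show "s = t" using lt4[of s] lt4[of t] by (auto simp: rB_def)
qed
lemma perm4_id: "perm4 id"
  unfolding perm4_def by simp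

lemma rot_ok0:
  assumes "s1 \<in> {1,2,3}" "s2 \<in> {1,2,3}" "r1 \<in> {1,2,3}" "r2 \<in> {1,2,3::nat}"
  shows "(s1 \<noteq> r1 \<and> s2 \<noteq> r2) \<or> (rA s1 \<noteq> r1 \<and> rA s2 \<noteq> r2) \<or> (rB s1 \<noteq> r1 \<and> rB s2 \<noteq> r2)"
  using assms by (elim insertE emptyE) (simp_all add: rA_def rB_def)

lemma rot_ok:
  assumes "s1 \<in> {1,2,3}" "s2 \<in> {1,2,3}" "r1 \<in> {1,2,3}" "r2 \<in> {1,2,3::nat}"
  shows "\<exists>p. perm4 p \<and> p 0 = 0 \<and> p s1 \<noteq> r1 \<and> p s2 \<noteq> r2"
proof -
  have 0: "id 0 = (0::nat)" "rA 0 = 0" "rB 0 = 0" by (simp_all add: rA_def rB_def)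
  from rot_ok0[OF assms] show ?thesis
  proof (elim disjE)
    assume "s1 \<noteq> r1 \<and> s2 \<noteq> r2" then show ?thesis using perm4_id 0 by (intro exI[of _ id]) simp
  next
    assume "rA s1 \<noteq> r1 \<and> rA s2 \<noteq> r2" then show ?thesis using perm4_rA 0 by (intro exI[of _ rA]) simp
  next
    assume "rB s1 \<noteq> r1 \<and> rB s2 \<noteq> r2" then show ?thesis using perm4_rB 0 by (intro exI[of _ rB]) simp
  qed
qed

lemma avoid3: "\<exists>t::nat. t < 4 \<and> t \<noteq> a \<and> t \<noteq> b \<and> t \<noteq> c" by presburger

lemma small_colorable:
  assumes "simple_graph H F" "card H \<le> 4"
  shows "dynamically_4_colorable H F"
proof -
  have fin: "finite H" using assms(1) by (rule sg_finite)
  obtain h where h: "bij_betw h H {0..<card H}" using ex_bij_betw_finite_nat[OF fin] by blast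
  have inj: "inj_on h H" using h by (simp add: bij_betw_def)
  have hr: "\<forall>v\<in>H. h v < card H" using h by (auto simp: bij_betw_def)
  have "okcol H F h H" unfolding okcol_def
  proof (intro conjI ballI)
    fix v assume "v \<in> H" then show "h v < 4" using hr assms(2) by fastforce
  next
    show "proper_coloring H F h" unfolding proper_coloring_def
    proof (intro ballI impI)
      fix u v assume uv: "u \<in> H" "v \<in> H" "F u v"
      have "u \<noteq> v" using sg_irr[OF assms(1) uv(3)] .
      then show "h u \<noteq> h v" using inj uv by (auto simp: inj_on_def)
    qed
  next
    fix v assume v: "v \<in> H"
    show "happy H F h v"
    proof (cases "card (neighbors H F v) \<le> 1")
      case True then show ?thesis by (simp add: happy_def)
    next
      case False
      have "finite (neighbors H F v)" using fin by (simp add: neighbors_def)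
      then obtain a b where ab: "a \<in> neighbors H F v" "b \<in> neighbors H F v" "a \<noteq> b"
        using False card_le_Suc0_iff_eq[of "neighbors H F v"] by auto
      then have "h a \<noteq> h b" using inj by (auto simp: inj_on_def neighbors_def)
      then show ?thesis unfolding happy_def using ab by blast
    qed
  qed
  then show ?thesis by (auto simp: colorable_okcol)
qed

lemma C5_nbrs:
  assumes "simple_graph H F" "iso_C5 H F" "u \<in> H"
  shows "\<exists>a b. a \<noteq> b \<and> (\<forall>z. F u z \<longleftrightarrow> z = a \<or> z = b)"
proof -
  obtain f :: "nat \<Rightarrow> _" where bij: "bij_betw f {0..<5} H" and
    adj: "\<forall>i<5. \<forall>j<5. F (f i) (f j) \<longleftrightarrow> (j = (i + 1) mod 5 \<or> i = (j + 1) mod 5)"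
    using assms(2) unfolding iso_C5_def by blast
  obtain i where i: "i < 5" "u = f i" using bij assms(3) by (auto simp: bij_betw_def)
  define a where "a = f ((i + 1) mod 5)"
  define b where "b = f ((i + 4) mod 5)"
  have inj: "inj_on f {0..<5}" using bij by (simp add: bij_betw_def)
  have "a \<noteq> b"
  proof
    assume "a = b"
    then have "(i + 1) mod 5 = (i + 4) mod 5" using inj unfolding a_def b_def inj_on_def by simp
    then show False by presburger
  qed
  moreover have "F u z \<longleftrightarrow> z = a \<or> z = b" for z
  proof
    assume "F u z"
    then have "z \<in> H" by (rule sg_in2[OF assms(1)])
    then obtain j where j: "j < 5" "z = f j" using bij by (auto simp: bij_betw_def)
    have "j = (i + 1) mod 5 \<or> i = (j + 1) mod 5" using adj i j \<open>F u z\<close> by auto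
    then have "j = (i + 1) mod 5 \<or> j = (i + 4) mod 5" using i(1) j(1) by presburger
    then show "z = a \<or> z = b" using j unfolding a_def b_def by auto
  next
    assume "z = a \<or> z = b"
    moreover have "F u a" unfolding a_def using adj i by simp
    moreover have "F u b"
    proof -
      have "i = ((i + 4) mod 5 + 1) mod 5" using i(1) by presburger
      moreover have "(i + 4) mod 5 < 5" by simp
      ultimately show ?thesis unfolding b_def using adj i by blast
    qed
    ultimately show "F u z" by auto
  qed
  ultimately show ?thesis by blast
qed

lemma transfer_nat:
  assumes sg: "simple_graph H F"
  obtains H' :: "nat set" and F' where "simple_graph H' F'"
    "connected_graph H F \<Longrightarrow> connected_graph H' F'"
    "has_K5_minor H' F' \<Longrightarrow> has_K5_minor H F"
    "iso_C5 H' F' \<Longrightarrow> iso_C5 H F"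
    "num_edges H' F' = num_edges H F"
    "dynamically_4_colorable H' F' \<Longrightarrow> dynamically_4_colorable H F"
proof -
  have fin: "finite H" by (rule sg_finite[OF sg])
  obtain h where hb: "bij_betw h H {0..<card H}" using ex_bij_betw_finite_nat[OF fin] by blast
  have inj: "inj_on h H" using hb by (simp add: bij_betw_def)
  define g where "g = inv_into H h"
  define H' where "H' = h ` H"
  define F' where "F' = (\<lambda>p q. p \<in> H' \<and> q \<in> H' \<and> F (g p) (g q))"
  have gh: "\<And>u. u \<in> H \<Longrightarrow> g (h u) = u" unfolding g_def using inj by simp
  have hg: "\<And>p. p \<in> H' \<Longrightarrow> h (g p) = p" unfolding g_def H'_def by (simp add: f_inv_into_f)
  have gH: "\<And>p. p \<in> H' \<Longrightarrow> g p \<in> H" unfolding g_def H'_def by (simp add: inv_into_into)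
  have hH: "\<And>u. u \<in> H \<Longrightarrow> h u \<in> H'" unfolding H'_def by simp
  have F'h: "\<And>u v. u \<in> H \<Longrightarrow> v \<in> H \<Longrightarrow> F' (h u) (h v) \<longleftrightarrow> F u v"
    unfolding F'_def using gh hH by simp
  have symF: "symm F" by (rule sg_symm[OF sg])
  have sg': "simple_graph H' F'"
  proof (rule sg_intro)
    show "finite H'" unfolding H'_def using fin by simp
    fix p q assume "F' p q"
    then have pq: "p \<in> H'" "q \<in> H'" "F (g p) (g q)" unfolding F'_def by auto
    have "g p \<noteq> g q" using sg_irr[OF sg pq(3)] .
    then have "p \<noteq> q" by auto
    moreover have "F (g q) (g p)" using sg_sym[OF sg pq(3)] .
    ultimately show "p \<in> H' \<and> q \<in> H' \<and> p \<noteq> q \<and> F' q p" using pq unfolding F'_def by auto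
  qed
  have symF': "symm F'" by (rule sg_symm[OF sg'])
  have conn: "connected_graph H' F'" if cg: "connected_graph H F"
  proof -
    have "connected_on (\<Union>((\<lambda>u. {h u}) ` H)) F'"
    proof (rule conn_image[where VH=H and F=F])
      show "connected_on H F" using cg by (simp add: connected_graph_def)
      show "H \<subseteq> H" by simp
      show "\<And>u. u \<in> H \<Longrightarrow> connected_on {h u} F'" by (rule conn_single)
      show "\<And>u v. u \<in> H \<Longrightarrow> v \<in> H \<Longrightarrow> F u v \<Longrightarrow> \<exists>p\<in>{h u}. \<exists>q\<in>{h v}. F' p q"
        using F'h by auto
      show "symm F'" by fact
    qed
    moreover have "\<Union>((\<lambda>u. {h u}) ` H) = H'" unfolding H'_def by auto
    ultimately show ?thesis by (simp add: connected_graph_def)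
  qed
  have K5: "has_K5_minor H F" if "has_K5_minor H' F'"
  proof (rule minor_map[where VH=H' and F=F' and \<phi>="\<lambda>p. {g p}"])
    show "has_K5_minor H' F'" by fact
    show "\<And>u. u \<in> H' \<Longrightarrow> {g u} \<subseteq> H \<and> connected_on {g u} F" using gH conn_single by auto
    show "{g u} \<inter> {g v} = {}" if "u \<in> H'" "v \<in> H'" "u \<noteq> v" for u v
    proof -
      have "g u \<noteq> g v" using hg[OF that(1)] hg[OF that(2)] that(3) by metis
      then show ?thesis by simp
    qed
    show "\<And>u v. u \<in> H' \<Longrightarrow> v \<in> H' \<Longrightarrow> F' u v \<Longrightarrow> \<exists>p\<in>{g u}. \<exists>q\<in>{g v}. F p q"
      unfolding F'_def by auto
    show "symm F" by fact
  qed
  have C5: "iso_C5 H F" if c5: "iso_C5 H' F'"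
  proof -
    obtain f :: "nat \<Rightarrow> nat" where fb: "bij_betw f {0..<5} H'" and
      adj: "\<forall>i<5. \<forall>j<5. F' (f i) (f j) \<longleftrightarrow> (j = (i + 1) mod 5 \<or> i = (j + 1) mod 5)"
      using c5 unfolding iso_C5_def by blast
    have hb': "bij_betw h H H'" unfolding H'_def using inj by (simp add: bij_betw_imageI)
    have gb: "bij_betw g H' H" unfolding g_def H'_def using bij_betw_inv_into[OF hb'] H'_def by simp
    have "bij_betw (g \<circ> f) {0..<5} H" using bij_betw_trans[OF fb gb] .
    moreover have "\<forall>i<5. \<forall>j<5. F ((g \<circ> f) i) ((g \<circ> f) j) \<longleftrightarrow> (j = (i + 1) mod 5 \<or> i = (j + 1) mod 5)"
    proof (intro allI impI)
      fix i j :: nat assume ij: "i < 5" "j < 5"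
      have "f i \<in> H'" "f j \<in> H'" using fb ij by (auto simp: bij_betw_def)
      then have "F ((g \<circ> f) i) ((g \<circ> f) j) \<longleftrightarrow> F' (f i) (f j)" unfolding F'_def by simp
      then show "F ((g \<circ> f) i) ((g \<circ> f) j) \<longleftrightarrow> (j = (i + 1) mod 5 \<or> i = (j + 1) mod 5)" using adj ij by simp
    qed
    ultimately show ?thesis unfolding iso_C5_def by blast
  qed
  have edges: "num_edges H' F' = num_edges H F"
  proof -
    have eq: "edge_set H' F' = (\<lambda>e. h ` e) ` edge_set H F"
    proof
      show "edge_set H' F' \<subseteq> (\<lambda>e. h ` e) ` edge_set H F"
      proof
        fix e assume "e \<in> edge_set H' F'"
        then obtain p q where e: "e = {p, q}" "p \<in> H'" "q \<in> H'" "F' p q" unfolding edge_set_def by blast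
        then have "{g p, g q} \<in> edge_set H F" unfolding edge_set_def F'_def using gH by blast
        moreover have "e = h ` {g p, g q}" using e hg by simp
        ultimately show "e \<in> (\<lambda>e. h ` e) ` edge_set H F" by blast
      qed
    next
      show "(\<lambda>e. h ` e) ` edge_set H F \<subseteq> edge_set H' F'"
      proof
        fix e assume "e \<in> (\<lambda>e. h ` e) ` edge_set H F"
        then obtain u v where uv: "e = h ` {u, v}" "u \<in> H" "v \<in> H" "F u v" unfolding edge_set_def by blast
        then have "e = {h u, h v}" "h u \<in> H'" "h v \<in> H'" "F' (h u) (h v)" using F'h hH by auto
        then show "e \<in> edge_set H' F'" unfolding edge_set_def by blast
      qed
    qed
    have "inj_on (\<lambda>e. h ` e) (edge_set H F)"
    proof (rule inj_onI)
      fix e1 e2 assume "e1 \<in> edge_set H F" "e2 \<in> edge_set H F" "h ` e1 = h ` e2"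
      moreover have "e1 \<subseteq> H" "e2 \<subseteq> H" using calculation(1,2) unfolding edge_set_def by auto
      ultimately show "e1 = e2" using inj_on_image_eq_iff[OF inj] by blast
    qed
    then show ?thesis unfolding num_edges_def eq by (simp add: card_image)
  qed
  have col: "dynamically_4_colorable H F" if dc: "dynamically_4_colorable H' F'"
  proof -
    obtain c' where c': "okcol H' F' c' H'" using dc by (auto simp: colorable_okcol)
    have "okcol H F (c' \<circ> h) H" unfolding okcol_def
    proof (intro conjI ballI)
      fix v assume "v \<in> H" then show "(c' \<circ> h) v < 4" using c' hH by (auto simp: okcol_def)
    next
      show "proper_coloring H F (c' \<circ> h)" unfolding proper_coloring_def
        using c' F'h hH unfolding okcol_def proper_coloring_def by auto
    next
      fix u assume u: "u \<in> H"
      have nb: "neighbors H' F' (h u) = h ` neighbors H F u"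
      proof
        show "neighbors H' F' (h u) \<subseteq> h ` neighbors H F u"
        proof
          fix p assume "p \<in> neighbors H' F' (h u)"
          then have "p \<in> H'" "F' (h u) p" unfolding neighbors_def by auto
          then have "g p \<in> neighbors H F u" "p = h (g p)" using gH hg F'h[OF u, of "g p"] unfolding neighbors_def by auto
          then show "p \<in> h ` neighbors H F u" by blast
        qed
        show "h ` neighbors H F u \<subseteq> neighbors H' F' (h u)"
          unfolding neighbors_def using F'h[OF u] hH by auto
      qed
      have ncard: "card (neighbors H' F' (h u)) = card (neighbors H F u)"
        unfolding nb by (rule card_image) (rule inj_on_subset[OF inj], auto simp: neighbors_def)
      have hp: "happy H' F' c' (h u)" using c' hH u by (auto simp: okcol_def)
      show "happy H F (c' \<circ> h) u"
      proof -
        have "card (neighbors H F u) \<le> 1 \<or> (\<exists>a\<in>neighbors H' F' (h u). \<exists>b\<in>neighbors H' F' (h u). c' a \<noteq> c' b)"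
          using hp ncard unfolding happy_def by simp
        then show ?thesis unfolding happy_def nb by auto
      qed
    qed
    then show ?thesis by (auto simp: colorable_okcol)
  qed
  show ?thesis using that[OF sg' conn K5 C5 edges col] .
qed

lemma finite_edge_set: "finite H \<Longrightarrow> finite (edge_set H F)"
proof -
  assume "finite H"
  moreover have "edge_set H F \<subseteq> Pow H" unfolding edge_set_def by auto
  ultimately show ?thesis by (meson finite_Pow_iff finite_subset)
qed

definition pend_V :: "'b set \<Rightarrow> 'b option set" where
  "pend_V H = insert None (Some ` H)"

definition pend_E :: "('b \<Rightarrow> 'b \<Rightarrow> bool) \<Rightarrow> 'b \<Rightarrow> 'b option \<Rightarrow> 'b option \<Rightarrow> bool" where
  "pend_E F v p q = (case p of None \<Rightarrow> q = Some v | Some a \<Rightarrow> (case q of None \<Rightarrow> a = v | Some b \<Rightarrow> F a b))"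

lemma pend_E_simps[simp]:
  "pend_E F v None q \<longleftrightarrow> q = Some v"
  "pend_E F v (Some a) None \<longleftrightarrow> a = v"
  "pend_E F v (Some a) (Some b) \<longleftrightarrow> F a b"
  by (simp_all add: pend_E_def)

context
  fixes H :: "'b set" and F and v
  assumes sg: "simple_graph H F" and vH: "v \<in> H"
begin

lemma pend_simple: "simple_graph (pend_V H) (pend_E F v)"
proof (rule sg_intro)
  show "finite (pend_V H)" unfolding pend_V_def using sg_finite[OF sg] by simp
  fix p q assume e: "pend_E F v p q"
  show "p \<in> pend_V H \<and> q \<in> pend_V H \<and> p \<noteq> q \<and> pend_E F v q p"
  proof (cases p)
    case None then show ?thesis using e vH by (auto simp: pend_V_def)
  next
    case (Some a)
    show ?thesis
    proof (cases q)
      case None then show ?thesis using e vH Some by (auto simp: pend_V_def)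
    next
      case (Some b)
      then have "F a b" using e \<open>p = Some a\<close> by simp
      then show ?thesis using \<open>p = Some a\<close> Some sg_all[OF sg] by (auto simp: pend_V_def)
    qed
  qed
qed

lemma pend_conn: "connected_graph H F \<Longrightarrow> connected_graph (pend_V H) (pend_E F v)"
proof -
  assume cg: "connected_graph H F"
  have symP: "symm (pend_E F v)" by (rule sg_symm[OF pend_simple])
  have "connected_on (\<Union>((\<lambda>a. {Some a}) ` H)) (pend_E F v)"
  proof (rule conn_image[where VH=H and F=F])
    show "connected_on H F" using cg by (simp add: connected_graph_def)
  qed (auto intro: conn_single symP)
  moreover have "\<Union>((\<lambda>a. {Some a}) ` H) = Some ` H" by auto
  ultimately have 1: "connected_on (Some ` H) (pend_E F v)" by simp
  have "connected_on (Some ` H \<union> {None}) (pend_E F v)"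
    by (rule conn_union_edge[OF 1 conn_single, where s="Some v" and t=None]) (use vH symP in auto)
  moreover have "Some ` H \<union> {None} = pend_V H" unfolding pend_V_def by auto
  ultimately show ?thesis by (simp add: connected_graph_def)
qed

lemma pend_K5: "has_K5_minor (pend_V H) (pend_E F v) \<Longrightarrow> has_K5_minor H F"
proof -
  assume "has_K5_minor (pend_V H) (pend_E F v)"
  then obtain B :: "nat \<Rightarrow> _" where
    B1: "\<forall>i<5. B i \<subseteq> pend_V H \<and> connected_on (B i) (pend_E F v)" and
    B2: "\<forall>i<5. \<forall>j<5. i \<noteq> j \<longrightarrow> B i \<inter> B j = {} \<and> (\<exists>u\<in>B i. \<exists>w\<in>B j. pend_E F v u w)"
    unfolding has_K5_minor_def by blast
  have symP: "symm (pend_E F v)" by (rule sg_symm[OF pend_simple])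
  have NB: "Some v \<in> B i" if i: "i < 5" and N: "None \<in> B i" for i
  proof (cases "B i = {None}")
    case True
    define j where "j = (i + 1) mod 5"
    define k where "k = (i + 2) mod 5"
    have jk: "j < 5" "k < 5" "j \<noteq> i" "k \<noteq> i" "j \<noteq> k" unfolding j_def k_def using i by presburger+
    obtain u w where "u \<in> B i" "w \<in> B j" "pend_E F v u w" using B2 i jk by blast
    then have "Some v \<in> B j" using True by auto
    moreover obtain u' w' where "u' \<in> B i" "w' \<in> B k" "pend_E F v u' w'" using B2 i jk by blast
    then have "Some v \<in> B k" using True by auto
    ultimately show ?thesis using B2 jk by blast
  next
    case False
    then obtain z where "z \<in> B i" "z \<noteq> None" using N by blast
    then obtain w where "w \<in> B i" "w \<noteq> None" "pend_E F v None w"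
      using conn_nbr[of "B i" "pend_E F v" None z] B1 i N by blast
    then show ?thesis by simp
  qed
  define B' where "B' i = B i - {None}" for i
  have "has_K5_minor (Some ` H) (pend_E F v)"
    unfolding has_K5_minor_def
  proof (intro exI[of _ B'] conjI allI impI)
    fix i :: nat assume i: "i < 5"
    show "B' i \<subseteq> Some ` H" using B1 i unfolding B'_def pend_V_def by auto
    show "connected_on (B' i) (pend_E F v)"
    proof (cases "None \<in> B i")
      case False then show ?thesis using B1 i unfolding B'_def by simp
    next
      case True
      have "Some v \<in> B i" using NB i True by simp
      then have "B i \<noteq> {None}" by auto
      then show ?thesis unfolding B'_def
        using leaf_remove[of "B i" "pend_E F v" None "Some v"] B1 i True symP by auto
    qed
  next
    fix i j :: nat assume ij: "i < 5" "j < 5" "i \<noteq> j"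
    show "B' i \<inter> B' j = {}" using B2 ij unfolding B'_def by blast
    obtain u w where uw: "u \<in> B i" "w \<in> B j" "pend_E F v u w" using B2 ij by blast
    have un: "u \<noteq> None"
    proof
      assume "u = None"
      then have "Some v \<in> B j" "Some v \<in> B i" using uw NB ij by auto
      then show False using B2 ij by blast
    qed
    have wn: "w \<noteq> None"
    proof
      assume wN: "w = None"
      then obtain a where "u = Some a" using un by auto
      then have "u = Some v" using uw wN by simp
      then have "Some v \<in> B j" "Some v \<in> B i" using uw NB ij wN by auto
      then show False using B2 ij by blast
    qed
    show "\<exists>u\<in>B' i. \<exists>w\<in>B' j. pend_E F v u w" using uw un wn unfolding B'_def by blast
  qed
  then show "has_K5_minor H F"
  proof (rule minor_map[where \<phi>="\<lambda>p. {the p}"])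
    show "\<And>u. u \<in> Some ` H \<Longrightarrow> {the u} \<subseteq> H \<and> connected_on {the u} F" using conn_single by auto
    show "\<And>u w. u \<in> Some ` H \<Longrightarrow> w \<in> Some ` H \<Longrightarrow> u \<noteq> w \<Longrightarrow> {the u} \<inter> {the w} = {}" by auto
    show "\<And>u w. u \<in> Some ` H \<Longrightarrow> w \<in> Some ` H \<Longrightarrow> pend_E F v u w \<Longrightarrow> \<exists>p\<in>{the u}. \<exists>q\<in>{the w}. F p q" by auto
    show "symm F" by (rule sg_symm[OF sg])
  qed
qed

lemma pend_C5: "\<not> iso_C5 (pend_V H) (pend_E F v)"
proof
  assume c5: "iso_C5 (pend_V H) (pend_E F v)"
  have "None \<in> pend_V H" by (simp add: pend_V_def)
  obtain a b where ab: "a \<noteq> b" "\<forall>z. pend_E F v None z \<longleftrightarrow> z = a \<or> z = b"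
    using C5_nbrs[OF pend_simple c5 \<open>None \<in> pend_V H\<close>] by blast
  have "pend_E F v None a" "pend_E F v None b" using ab(2) by blast+
  then have "a = Some v" "b = Some v" by simp_all
  then show False using ab(1) by simp
qed

lemma pend_edges: "num_edges (pend_V H) (pend_E F v) = num_edges H F + 1"
proof -
  have eq: "edge_set (pend_V H) (pend_E F v) = insert {None, Some v} ((\<lambda>e. Some ` e) ` edge_set H F)"
  proof
    show "edge_set (pend_V H) (pend_E F v) \<subseteq> insert {None, Some v} ((\<lambda>e. Some ` e) ` edge_set H F)"
    proof
      fix e assume "e \<in> edge_set (pend_V H) (pend_E F v)"
      then obtain p q where e: "e = {p, q}" "p \<in> pend_V H" "q \<in> pend_V H" "pend_E F v p q"
        unfolding edge_set_def by blast
      show "e \<in> insert {None, Some v} ((\<lambda>e. Some ` e) ` edge_set H F)"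
      proof (cases p)
        case None then show ?thesis using e by auto
      next
        case (Some a)
        show ?thesis
        proof (cases q)
          case None then show ?thesis using e \<open>p = Some a\<close> by auto
        next
          case (Some b)
          then have "F a b" "a \<in> H" "b \<in> H" using e \<open>p = Some a\<close> unfolding pend_V_def by auto
          then have "{a, b} \<in> edge_set H F" unfolding edge_set_def by blast
          moreover have "e = Some ` {a, b}" using e \<open>p = Some a\<close> Some by simp
          ultimately show ?thesis by blast
        qed
      qed
    qed
  next
    show "insert {None, Some v} ((\<lambda>e. Some ` e) ` edge_set H F) \<subseteq> edge_set (pend_V H) (pend_E F v)"
    proof
      fix e assume "e \<in> insert {None, Some v} ((\<lambda>e. Some ` e) ` edge_set H F)"
      then show "e \<in> edge_set (pend_V H) (pend_E F v)"
      proof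
        assume "e = {None, Some v}"
        moreover have "None \<in> pend_V H" "Some v \<in> pend_V H" using vH unfolding pend_V_def by auto
        moreover have "pend_E F v None (Some v)" by simp
        ultimately show ?thesis unfolding edge_set_def by blast
      next
        assume "e \<in> (\<lambda>e. Some ` e) ` edge_set H F"
        then obtain a b where ab: "e = Some ` {a, b}" "a \<in> H" "b \<in> H" "F a b" unfolding edge_set_def by blast
        then have "e = {Some a, Some b}" "Some a \<in> pend_V H" "Some b \<in> pend_V H" "pend_E F v (Some a) (Some b)"
          unfolding pend_V_def by auto
        then show ?thesis unfolding edge_set_def by blast
      qed
    qed
  qed
  have fin: "finite ((\<lambda>e. Some ` e) ` edge_set H F)" using finite_edge_set[OF sg_finite[OF sg]] by simp
  have notin: "{None, Some v} \<notin> (\<lambda>e. Some ` e) ` edge_set H F" by auto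
  have inj: "inj_on (\<lambda>e. Some ` e) (edge_set H F)" by (rule inj_onI) (simp add: inj_image_eq_iff)
  show ?thesis unfolding num_edges_def eq using fin notin by (simp add: card_image[OF inj])
qed

lemma pend_col:
  assumes "dynamically_4_colorable (pend_V H) (pend_E F v)"
  shows "\<exists>c. okcol H F c (H - {v})"
proof -
  obtain c where c: "okcol (pend_V H) (pend_E F v) c (pend_V H)" using assms by (auto simp: colorable_okcol)
  have SH: "\<And>a. a \<in> H \<Longrightarrow> Some a \<in> pend_V H" unfolding pend_V_def by auto
  have "okcol H F (c \<circ> Some) (H - {v})" unfolding okcol_def
  proof (intro conjI ballI)
    fix u assume "u \<in> H" then show "(c \<circ> Some) u < 4" using c SH by (auto simp: okcol_def)
  next
    show "proper_coloring H F (c \<circ> Some)" using c SH unfolding okcol_def proper_coloring_def by auto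
  next
    fix u assume u: "u \<in> H - {v}"
    have nb: "neighbors (pend_V H) (pend_E F v) (Some u) = Some ` neighbors H F u"
    proof
      show "neighbors (pend_V H) (pend_E F v) (Some u) \<subseteq> Some ` neighbors H F u"
      proof
        fix p assume p: "p \<in> neighbors (pend_V H) (pend_E F v) (Some u)"
        have "p \<noteq> None"
        proof
          assume "p = None"
          then have "pend_E F v (Some u) None" using p unfolding neighbors_def by simp
          then show False using u by simp
        qed
        then obtain b where "p = Some b" by auto
        then show "p \<in> Some ` neighbors H F u" using p unfolding neighbors_def pend_V_def by auto
      qed
      show "Some ` neighbors H F u \<subseteq> neighbors (pend_V H) (pend_E F v) (Some u)"
        unfolding neighbors_def pend_V_def by auto
    qed
    have ncard: "card (neighbors (pend_V H) (pend_E F v) (Some u)) = card (neighbors H F u)"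
      unfolding nb by (simp add: card_image)
    have hp: "happy (pend_V H) (pend_E F v) c (Some u)" using c SH u by (auto simp: okcol_def)
    have "card (neighbors H F u) \<le> 1 \<or> (\<exists>a\<in>neighbors (pend_V H) (pend_E F v) (Some u). \<exists>b\<in>neighbors (pend_V H) (pend_E F v) (Some u). c a \<noteq> c b)"
      using hp ncard unfolding happy_def by simp
    then show "happy H F (c \<circ> Some) u" unfolding happy_def nb by auto
  qed
  then show ?thesis by blast
qed

end

locale mincex =
  fixes V :: "'a set" and E :: "'a \<Rightarrow> 'a \<Rightarrow> bool"
  assumes sg: "simple_graph V E" and cg: "connected_graph V E"
    and nK: "\<not> has_K5_minor V E" and nC: "\<not> iso_C5 V E"
    and ncol: "\<not> dynamically_4_colorable V E"
    and minim: "\<And>(V' :: nat set) E'. simple_graph V' E' \<Longrightarrow> connected_graph V' E' \<Longrightarrow>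
           \<not> has_K5_minor V' E' \<Longrightarrow> \<not> iso_C5 V' E' \<Longrightarrow>
           num_edges V' E' < num_edges V E \<Longrightarrow> dynamically_4_colorable V' E'"
begin

lemma finV: "finite V" by (rule sg_finite[OF sg])
lemma symE: "symm E" by (rule sg_symm[OF sg])
lemma connV: "connected_on V E" using cg by (simp add: connected_graph_def)
lemma Ein: "E u v \<Longrightarrow> u \<in> V \<and> v \<in> V" using sg_in1[OF sg] sg_in2[OF sg] by blast
lemma Esym: "E u v \<Longrightarrow> E v u" by (rule sg_sym[OF sg])
lemma Eirr: "E u v \<Longrightarrow> u \<noteq> v" by (rule sg_irr[OF sg])

lemma M:
  fixes H :: "'b set"
  assumes "simple_graph H F" "connected_graph H F" "\<not> has_K5_minor H F" "\<not> iso_C5 H F"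
    "num_edges H F < num_edges V E"
  shows "\<exists>c. okcol H F c H"
proof -
  obtain H' :: "nat set" and F' where t: "simple_graph H' F'"
    "connected_graph H F \<Longrightarrow> connected_graph H' F'"
    "has_K5_minor H' F' \<Longrightarrow> has_K5_minor H F"
    "iso_C5 H' F' \<Longrightarrow> iso_C5 H F"
    "num_edges H' F' = num_edges H F"
    "dynamically_4_colorable H' F' \<Longrightarrow> dynamically_4_colorable H F"
    using transfer_nat[OF assms(1)] by blast
  have "dynamically_4_colorable H' F'"
    by (rule minim) (use t assms in auto)
  then show ?thesis using t(6) by (auto simp: colorable_okcol)
qed

lemma P:
  fixes H :: "'b set"
  assumes "simple_graph H F" "connected_graph H F" "\<not> has_K5_minor H F"
    "num_edges H F + 1 < num_edges V E" "v \<in> H"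
  shows "\<exists>c. okcol H F c (H - {v})"
proof -
  have "\<exists>c. okcol (pend_V H) (pend_E F v) c (pend_V H)"
  proof (rule M)
    show "simple_graph (pend_V H) (pend_E F v)" by (rule pend_simple[OF assms(1,5)])
    show "connected_graph (pend_V H) (pend_E F v)" by (rule pend_conn[OF assms(1,5,2)])
    show "\<not> has_K5_minor (pend_V H) (pend_E F v)" using pend_K5[OF assms(1,5)] assms(3) by blast
    show "\<not> iso_C5 (pend_V H) (pend_E F v)" by (rule pend_C5[OF assms(1,5)])
    show "num_edges (pend_V H) (pend_E F v) < num_edges V E" using pend_edges[OF assms(1,5)] assms(4) by simp
  qed
  then show ?thesis using pend_col[OF assms(1,5)] by (auto simp: colorable_okcol)
qed

lemma sub_noK5:
  assumes "S \<subseteq> V" "\<And>u v. F u v \<Longrightarrow> u \<in> S \<Longrightarrow> v \<in> S \<Longrightarrow> E u v"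
  shows "\<not> has_K5_minor S F"
proof
  assume "has_K5_minor S F"
  then have "has_K5_minor V E"
  proof (rule minor_map[where \<phi>="\<lambda>u. {u}"])
    show "\<And>u. u \<in> S \<Longrightarrow> {u} \<subseteq> V \<and> connected_on {u} E" using assms(1) conn_single by auto
    show "\<And>u v. u \<in> S \<Longrightarrow> v \<in> S \<Longrightarrow> u \<noteq> v \<Longrightarrow> {u} \<inter> {v} = {}" by auto
    show "\<And>u v. u \<in> S \<Longrightarrow> v \<in> S \<Longrightarrow> F u v \<Longrightarrow> \<exists>p\<in>{u}. \<exists>q\<in>{v}. E p q" using assms(2) by auto
    show "symm E" by (rule symE)
  qed
  then show False using nK by simp
qed

lemma ind_simple: "S \<subseteq> V \<Longrightarrow> simple_graph S (rel_on S E)"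
proof -
  assume S: "S \<subseteq> V"
  show ?thesis
  proof (rule sg_intro)
    show "finite S" using finV S by (rule finite_subset[rotated])
    fix u v assume "rel_on S E u v"
    then show "u \<in> S \<and> v \<in> S \<and> u \<noteq> v \<and> rel_on S E v u"
      unfolding rel_on_def using Eirr Esym by blast
  qed
qed

lemma ind_noK5: "S \<subseteq> V \<Longrightarrow> \<not> has_K5_minor S (rel_on S E)"
  by (rule sub_noK5) (auto simp: rel_on_def)

lemma edges_sub:
  assumes "S \<subseteq> V" "\<And>u v. F u v \<Longrightarrow> u \<in> S \<and> v \<in> S \<and> E u v"
    "D \<subseteq> edge_set V E" "D \<inter> edge_set S F = {}"
  shows "num_edges S F + card D \<le> num_edges V E"
proof -
  have sub: "edge_set S F \<subseteq> edge_set V E" unfolding edge_set_def using assms(1,2) by blast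
  have fin: "finite (edge_set V E)" by (rule finite_edge_set[OF finV])
  have "card (edge_set S F \<union> D) = card (edge_set S F) + card D"
    by (rule card_Un_disjoint) (use fin sub assms(3,4) in \<open>auto intro: finite_subset\<close>)
  moreover have "card (edge_set S F \<union> D) \<le> card (edge_set V E)"
    by (rule card_mono[OF fin]) (use sub assms(3) in auto)
  ultimately show ?thesis unfolding num_edges_def by simp
qed

lemma out_edge:
  assumes "\<And>u v. F u v \<Longrightarrow> u \<in> S \<and> v \<in> S \<and> E u v" "b \<notin> S" "E b p"
  shows "{b, p} \<in> edge_set V E" "{b, p} \<notin> edge_set S F"
proof -
  show "{b, p} \<in> edge_set V E" unfolding edge_set_def using assms(3) Ein by blast
  show "{b, p} \<notin> edge_set S F"
  proof
    assume "{b, p} \<in> edge_set S F"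
    then obtain u v where "{b, p} = {u, v}" "u \<in> S" "v \<in> S" unfolding edge_set_def by blast
    then have "b \<in> S" by (metis doubleton_eq_iff)
    then show False using assms(2) by simp
  qed
qed

lemma edges_out1:
  assumes "S \<subseteq> V" "\<And>u v. F u v \<Longrightarrow> u \<in> S \<and> v \<in> S \<and> E u v" "b \<notin> S" "E b p"
  shows "num_edges S F < num_edges V E"
proof -
  have "num_edges S F + card {{b, p}} \<le> num_edges V E"
    by (rule edges_sub[OF assms(1,2)]) (use out_edge[OF assms(2-4)] in auto)
  then show ?thesis by simp
qed

lemma edges_out2:
  assumes "S \<subseteq> V" "\<And>u v. F u v \<Longrightarrow> u \<in> S \<and> v \<in> S \<and> E u v" "b \<notin> S" "E b p" "E b q" "p \<noteq> q"
  shows "num_edges S F + 1 < num_edges V E"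
proof -
  have "num_edges S F + card {{b, p}, {b, q}} \<le> num_edges V E"
    by (rule edges_sub[OF assms(1,2)]) (use out_edge[OF assms(2-4)] out_edge[OF assms(2,3,5)] in auto)
  moreover have "{b, p} \<noteq> {b, q}" using assms(6) by (metis doubleton_eq_iff)
  ultimately show ?thesis by simp
qed

lemma card5: "card V \<ge> 5"
proof (rule ccontr)
  assume "\<not> card V \<ge> 5"
  then have "dynamically_4_colorable V E" using small_colorable[OF sg] by simp
  then show False using ncol by simp
qed

lemma colorable_contra: "okcol V E c V \<Longrightarrow> False"
  using ncol by (auto simp: colorable_okcol)

end

lemma happy_transfer:
  assumes "happy H F c x" "neighbors V' E' x = neighbors H F x" "\<And>z. z \<in> neighbors H F x \<Longrightarrow> c' z = c z"
  shows "happy V' E' c' x"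
  using assms unfolding happy_def by auto

definition pat :: "nat \<Rightarrow> nat" where
  "pat d = (if d = 0 then 0 else if d = 1 then 1 else if d = 2 then 2 else if d = 3 then 3 else 1)"

lemma lt5: "i < 5 \<Longrightarrow> i = 0 \<or> i = 1 \<or> i = 2 \<or> i = 3 \<or> i = (4::nat)" by presburger

lemma pat_ok1: "i < 5 \<Longrightarrow> k < 5 \<Longrightarrow> pat ((i + 5 - k) mod 5) \<noteq> pat (((i + 1) mod 5 + 5 - k) mod 5)"
  by (drule lt5, drule lt5) (elim disjE; simp add: pat_def)

lemma pat_ok2: "i < 5 \<Longrightarrow> k < 5 \<Longrightarrow> i \<noteq> k \<Longrightarrow>
   pat (((i + 1) mod 5 + 5 - k) mod 5) \<noteq> pat (((i + 4) mod 5 + 5 - k) mod 5)"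
  by (drule lt5, drule lt5) (elim disjE; simp add: pat_def)

lemma pat_ok3: "k < 5 \<Longrightarrow> pat (((k + 1) mod 5 + 5 - k) mod 5) = 1 \<and> pat ((k + 5 - k) mod 5) = 0"
  by (drule lt5) (elim disjE; simp add: pat_def)

lemma cyc_back: "i < 5 \<Longrightarrow> i = ((i + 4) mod 5 + 1) mod (5::nat)" by presburger

context mincex
begin

lemma sep_reach:
  assumes sep: "separation V E A B" and a: "a \<in> A"
  shows "\<exists>s\<in>A \<inter> B. (rel_on A E)\<^sup>*\<^sup>* a s"
proof -
  have AB: "A \<union> B = V" "B - A \<noteq> {}" and ne: "\<forall>u\<in>A - B. \<forall>v\<in>B - A. \<not> E u v"
    using sep by (auto simp: separation_def)
  obtain b where b: "b \<in> B - A" using AB by blast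
  have "(rel_on V E)\<^sup>*\<^sup>* a b" using conn_path[OF connV] a b AB by blast
  then have "(b \<in> A \<and> (rel_on A E)\<^sup>*\<^sup>* a b) \<or> (\<exists>s\<in>A \<inter> B. (rel_on A E)\<^sup>*\<^sup>* a s)"
  proof (induction rule: rtranclp_induct)
    case base then show ?case using a by simp
  next
    case (step y z)
    have yz: "y \<in> V" "z \<in> V" "E y z" using step(2) by (auto simp: rel_on_def)
    from step(3) show ?case
    proof
      assume h: "y \<in> A \<and> (rel_on A E)\<^sup>*\<^sup>* a y"
      show ?case
      proof (cases "z \<in> A")
        case True
        then have "rel_on A E y z" using h yz by (simp add: rel_on_def)
        then show ?thesis using h True by (meson rtranclp.rtrancl_into_rtrancl)
      next
        case False
        then have "z \<in> B - A" using yz AB by blast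
        then have "y \<in> B" using ne h yz by blast
        then show ?thesis using h by blast
      qed
    next
      assume "\<exists>s\<in>A \<inter> B. (rel_on A E)\<^sup>*\<^sup>* a s" then show ?case by blast
    qed
  qed
  then show ?thesis using b by blast
qed

lemma sep_nonempty: "separation V E A B \<Longrightarrow> A \<inter> B \<noteq> {}"
  using sep_reach[of A B] by (auto simp: separation_def)

lemma sep_sym: "separation V E A B \<Longrightarrow> separation V E B A"
  unfolding separation_def using Esym by blast

lemma sep_sub: "separation V E A B \<Longrightarrow> A \<subseteq> V \<and> B \<subseteq> V"
  unfolding separation_def by blast

end

context mincex begin
lemma leaf_C5:
  assumes b: "b \<in> V" and bn: "\<And>z. E b z \<longleftrightarrow> z = v"
    and c5: "iso_C5 (V - {b}) (rel_on (V - {b}) E)"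
  shows False
proof -
  let ?S = "V - {b}"
  obtain f :: "nat \<Rightarrow> 'a" where fb: "bij_betw f {0..<5} ?S" and
    adj: "\<forall>i<5. \<forall>j<5. rel_on ?S E (f i) (f j) \<longleftrightarrow> (j = (i + 1) mod 5 \<or> i = (j + 1) mod 5)"
    using c5 unfolding iso_C5_def by blast
  have vS: "v \<in> ?S" using bn Ein Eirr by (metis DiffI singletonD)
  have "v \<in> f ` {0..<5}" using fb vS by (simp add: bij_betw_def)
  then obtain k where k: "k < 5" "f k = v" by auto
  have fS: "\<And>i. i < 5 \<Longrightarrow> f i \<in> ?S" using fb by (auto simp: bij_betw_def)
  have adjE: "\<And>i j. i < 5 \<Longrightarrow> j < 5 \<Longrightarrow> E (f i) (f j) \<longleftrightarrow> (j = (i + 1) mod 5 \<or> i = (j + 1) mod 5)"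
    using adj fS by (auto simp: rel_on_def)
  define g where "g = inv_into {0..<5} f"
  have gS: "\<And>z. z \<in> ?S \<Longrightarrow> g z < 5 \<and> f (g z) = z" unfolding g_def using fb
    by (metis atLeastLessThan_iff bij_betw_def f_inv_into_f inv_into_into)
  have gf: "\<And>i. i < 5 \<Longrightarrow> g (f i) = i" unfolding g_def using fb
    by (simp add: bij_betw_def inv_into_f_f)
  define c where "c z = (if z = b then 2 else pat ((g z + 5 - k) mod 5))" for z
  have cf: "\<And>i. i < 5 \<Longrightarrow> c (f i) = pat ((i + 5 - k) mod 5)"
    using gf fS unfolding c_def by auto
  have cb: "c b = 2" unfolding c_def by simp
  have cv: "c v = 0" using cf[OF k(1)] k pat_ok3[OF k(1)] by simp
  have c1: "c (f ((k + 1) mod 5)) = 1" using cf pat_ok3[OF k(1)] by simp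
  have "okcol V E c V" unfolding okcol_def
  proof (intro conjI ballI)
    fix z assume "z \<in> V" show "c z < 4" unfolding c_def pat_def by simp
  next
    show "proper_coloring V E c" unfolding proper_coloring_def
    proof (intro ballI impI)
      fix x y assume xy: "x \<in> V" "y \<in> V" "E x y"
      show "c x \<noteq> c y"
      proof (cases "x = b")
        case True
        then have "y = v" using bn xy by simp
        then show ?thesis using True cb cv by simp
      next
        case xb: False
        show ?thesis
        proof (cases "y = b")
          case True
          then have "x = v" using bn xy Esym by blast
          then show ?thesis using True cb cv by simp
        next
          case yb: False
          have "x \<in> ?S" "y \<in> ?S" using xy xb yb by auto
          then have gx: "g x < 5 \<and> f (g x) = x" and gy: "g y < 5 \<and> f (g y) = y" using gS by presburger+
          obtain i j where ij: "i < 5" "j < 5" "x = f i" "y = f j" using gx gy by metis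
          then have "j = (i + 1) mod 5 \<or> i = (j + 1) mod 5" using adjE xy by simp
          then show ?thesis
          proof
            assume "j = (i + 1) mod 5"
            then show ?thesis using cf ij pat_ok1[OF ij(1) k(1)] by simp
          next
            assume "i = (j + 1) mod 5"
            then show ?thesis using cf ij pat_ok1[OF ij(2) k(1)] by simp
          qed
        qed
      qed
    qed
  next
    fix x assume x: "x \<in> V"
    show "happy V E c x"
    proof (cases "x = b")
      case True
      have "neighbors V E x \<subseteq> {v}" unfolding neighbors_def using True bn by auto
      then have "card (neighbors V E x) \<le> card {v}" by (rule card_mono[rotated]) simp
      then have "card (neighbors V E x) \<le> 1" by simp
      then show ?thesis by (simp add: happy_def)
    next
      case False
      have "x \<in> ?S" using x False by auto
      then have gx: "g x < 5 \<and> f (g x) = x" using gS by presburger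
      obtain i where i: "i < 5" "x = f i" using gx by metis
      show ?thesis
      proof (cases "i = k")
        case True
        have "E x (f ((k + 1) mod 5))" using adjE i True by simp
        moreover have "E x b" using bn[of x] True i k Esym by simp
        moreover have "c (f ((k + 1) mod 5)) \<noteq> c b" using c1 cb by simp
        moreover have "f ((k + 1) mod 5) \<in> V" using fS[of "(k + 1) mod 5"] by simp
        ultimately show ?thesis using happy_pair[of "f ((k + 1) mod 5)" V b E x c] b by blast
      next
        case False
        have m1: "(i + 1) mod 5 < 5" "(i + 4) mod 5 < 5" by simp_all
        have "E x (f ((i + 1) mod 5))" using adjE i m1 by simp
        moreover have "E x (f ((i + 4) mod 5))" using adjE[OF i(1) m1(2)] i cyc_back[OF i(1)] by simp
        moreover have "c (f ((i + 1) mod 5)) \<noteq> c (f ((i + 4) mod 5))"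
          using cf m1 pat_ok2[OF i(1) k(1) False] by simp
        moreover have "f ((i + 1) mod 5) \<in> V" "f ((i + 4) mod 5) \<in> V" using fS m1 by auto
        ultimately show ?thesis using happy_pair[of "f ((i + 1) mod 5)" V "f ((i + 4) mod 5)" E x c] by blast
      qed
    qed
  qed
  then show False by (rule colorable_contra)
qed

end

context mincex
begin

lemma has_nbr: "x \<in> V \<Longrightarrow> \<exists>w. E x w"
proof -
  assume x: "x \<in> V"
  have "V \<noteq> {x}" using card5 by auto
  then obtain y where "y \<in> V" "y \<noteq> x" using x by blast
  then show ?thesis using conn_nbr[OF connV x] by blast
qed

lemma no_leaf: "b \<in> V \<Longrightarrow> \<exists>p q. p \<noteq> q \<and> E b p \<and> E b q"
proof (rule ccontr)
  assume b: "b \<in> V" and nl: "\<not> (\<exists>p q. p \<noteq> q \<and> E b p \<and> E b q)"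
  obtain v where bv: "E b v" using has_nbr[OF b] by blast
  have bn: "E b z \<longleftrightarrow> z = v" for z using nl bv by blast
  let ?S = "V - {b}"
  have vS: "v \<in> ?S" using bv Ein Eirr by blast
  have Vb: "V \<noteq> {b}" using card5 by auto
  have connS: "connected_on ?S E" by (rule leaf_remove[OF connV b Vb _ symE]) (use bn in simp)
  have connS': "connected_on ?S (rel_on ?S E)" by (rule conn_mono_rel[OF connS]) (simp add: rel_on_def)
  have nc5: "\<not> iso_C5 ?S (rel_on ?S E)" using leaf_C5[OF b bn] by blast
  obtain c where c: "okcol ?S (rel_on ?S E) c ?S"
  proof -
    have "\<exists>c. okcol ?S (rel_on ?S E) c ?S"
    proof (rule M)
      show "simple_graph ?S (rel_on ?S E)" by (rule ind_simple) auto
      show "connected_graph ?S (rel_on ?S E)" using connS' by (simp add: connected_graph_def)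
      show "\<not> has_K5_minor ?S (rel_on ?S E)" by (rule ind_noK5) auto
      show "\<not> iso_C5 ?S (rel_on ?S E)" by fact
      show "num_edges ?S (rel_on ?S E) < num_edges V E"
        by (rule edges_out1[where b=b and p=v]) (use b bv in \<open>auto simp: rel_on_def\<close>)
    qed
    then show ?thesis using that by blast
  qed
  have "?S \<noteq> {v}"
  proof
    assume "?S = {v}"
    then have "V \<subseteq> {b, v}" by auto
    then have "card V \<le> card {b, v}" by (rule card_mono[rotated]) simp
    moreover have "card {b, v} \<le> 2" by (simp add: card_insert_if)
    ultimately have "card V \<le> 2" by simp
    then show False using card5 by simp
  qed
  then obtain y where "y \<in> ?S" "y \<noteq> v" using vS by blast
  then obtain w where w: "w \<in> ?S" "w \<noteq> v" "rel_on ?S E v w" using conn_nbr[OF connS' vS] by blast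
  obtain t where t: "t < 4" "t \<noteq> c v" "t \<noteq> c w" using avoid3 by blast
  define c' where "c' = c(b := t)"
  have c4: "\<forall>z\<in>?S. c z < 4" and cpr: "proper_coloring ?S (rel_on ?S E) c" and chp: "\<forall>z\<in>?S. happy ?S (rel_on ?S E) c z"
    using c by (auto simp: okcol_def)
  have vb: "v \<noteq> b" "w \<noteq> b" using vS w by auto
  have "okcol V E c' V" unfolding okcol_def
  proof (intro conjI ballI)
    fix z assume "z \<in> V" then show "c' z < 4" using c4 t unfolding c'_def by auto
  next
    show "proper_coloring V E c'" unfolding proper_coloring_def
    proof (intro ballI impI)
      fix x y assume xy: "x \<in> V" "y \<in> V" "E x y"
      show "c' x \<noteq> c' y"
      proof (cases "x = b")
        case True then have "y = v" using bn xy by simp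
        then show ?thesis using True t vb unfolding c'_def by simp
      next
        case xb: False
        show ?thesis
        proof (cases "y = b")
          case True then have "x = v" using bn[of x] xy Esym by blast
          then show ?thesis using True t vb unfolding c'_def by simp
        next
          case False
          then show ?thesis using cpr xy xb unfolding proper_coloring_def rel_on_def c'_def by simp
        qed
      qed
    qed
  next
    fix x assume x: "x \<in> V"
    show "happy V E c' x"
    proof (cases "x = b")
      case True
      have "neighbors V E x \<subseteq> {v}" unfolding neighbors_def using True bn by auto
      then have "card (neighbors V E x) \<le> card {v}" by (rule card_mono[rotated]) simp
      then show ?thesis by (simp add: happy_def)
    next
      case xb: False
      show ?thesis
      proof (cases "x = v")
        case True
        have "c' w \<noteq> c' b" using t vb unfolding c'_def by simp
        moreover have "E x w" "E x b" using True w bv Esym by (auto simp: rel_on_def)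
        ultimately show ?thesis using happy_pair[of w V b E x c'] w b by blast
      next
        case False
        have nb: "neighbors V E x = neighbors ?S (rel_on ?S E) x"
        proof -
          have "E x z \<Longrightarrow> z \<noteq> b" for z using bn[of x] False Esym by blast
          then show ?thesis unfolding neighbors_def rel_on_def using x xb by auto
        qed
        show ?thesis
        proof (rule happy_transfer[OF _ nb])
          show "happy ?S (rel_on ?S E) c x" using chp x xb by blast
          show "\<And>z. z \<in> neighbors ?S (rel_on ?S E) x \<Longrightarrow> c' z = c z"
            unfolding neighbors_def c'_def by auto
        qed
      qed
    qed
  qed
  then show False by (rule colorable_contra)
qed

definition gl :: "'a set \<Rightarrow> ('a \<Rightarrow> nat) \<Rightarrow> ('a \<Rightarrow> nat) \<Rightarrow> 'a \<Rightarrow> nat" where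
  "gl A c1 c2 z = (if z \<in> A then c1 z else c2 z)"

lemma glue:
  assumes sep: "separation V E A B"
    and c1: "okcol A (rel_on A E) c1 (A - B)"
    and c2: "okcol B (rel_on B E) c2 (B - A)"
    and agree: "\<And>z. z \<in> A \<inter> B \<Longrightarrow> c1 z = c2 z"
    and hap: "\<And>x. x \<in> A \<inter> B \<Longrightarrow> happy V E (gl A c1 c2) x"
  shows False
proof -
  have AB: "A \<union> B = V" and ne: "\<And>u v. u \<in> A - B \<Longrightarrow> v \<in> B - A \<Longrightarrow> \<not> E u v"
    using sep by (auto simp: separation_def)
  let ?c = "gl A c1 c2"
  have cA: "\<And>z. z \<in> A \<Longrightarrow> ?c z = c1 z" unfolding gl_def by simp
  have cB: "\<And>z. z \<in> B \<Longrightarrow> ?c z = c2 z" unfolding gl_def using agree by auto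
  have "okcol V E ?c V" unfolding okcol_def
  proof (intro conjI ballI)
    fix z assume "z \<in> V"
    then have "z \<in> A \<or> z \<in> B" using AB by blast
    then show "?c z < 4"
    proof
      assume "z \<in> A" then show ?thesis using c1 cA unfolding okcol_def by simp
    next
      assume "z \<in> B" then show ?thesis using c2 cB unfolding okcol_def by simp
    qed
  next
    show "proper_coloring V E ?c" unfolding proper_coloring_def
    proof (intro ballI impI)
      fix x y assume xy: "x \<in> V" "y \<in> V" "E x y"
      show "?c x \<noteq> ?c y"
      proof (cases "x \<in> A \<and> y \<in> A")
        case True
        then show ?thesis using c1 xy cA unfolding okcol_def proper_coloring_def rel_on_def by auto
      next
        case False
        have "x \<in> B \<and> y \<in> B"
        proof (rule ccontr)
          assume "\<not> (x \<in> B \<and> y \<in> B)"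
          then have "(x \<in> A - B \<and> y \<in> B - A) \<or> (x \<in> B - A \<and> y \<in> A - B)" using False xy AB by blast
          then show False using ne xy Esym by blast
        qed
        then show ?thesis using c2 xy cB unfolding okcol_def proper_coloring_def rel_on_def by auto
      qed
    qed
  next
    fix x assume x: "x \<in> V"
    show "happy V E ?c x"
    proof (cases "x \<in> A \<inter> B")
      case True then show ?thesis by (rule hap)
    next
      case False
      then have "x \<in> A - B \<or> x \<in> B - A" using x AB by blast
      then show ?thesis
      proof
        assume xa: "x \<in> A - B"
        have nb: "neighbors V E x = neighbors A (rel_on A E) x"
          unfolding neighbors_def rel_on_def using xa ne AB by auto
        show ?thesis
        proof (rule happy_transfer[OF _ nb])
          show "happy A (rel_on A E) c1 x" using c1 xa unfolding okcol_def by blast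
          show "\<And>z. z \<in> neighbors A (rel_on A E) x \<Longrightarrow> ?c z = c1 z" using cA unfolding neighbors_def by auto
        qed
      next
        assume xb: "x \<in> B - A"
        have nb: "neighbors V E x = neighbors B (rel_on B E) x"
          unfolding neighbors_def rel_on_def using xb ne AB Esym by blast
        show ?thesis
        proof (rule happy_transfer[OF _ nb])
          show "happy B (rel_on B E) c2 x" using c2 xb unfolding okcol_def by blast
          show "\<And>z. z \<in> neighbors B (rel_on B E) x \<Longrightarrow> ?c z = c2 z" using cB unfolding neighbors_def by auto
        qed
      qed
    qed
  qed
  then show False by (rule colorable_contra)
qed

lemma gl_A: "z \<in> A \<Longrightarrow> gl A c1 c2 z = c1 z" unfolding gl_def by simp
lemma gl_B: "z \<notin> A \<Longrightarrow> gl A c1 c2 z = c2 z" unfolding gl_def by simp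

end

context mincex
begin

lemma side_conn_from:
  assumes "separation V E A B" "r \<in> A" "\<And>a. a \<in> A \<Longrightarrow> (rel_on A E)\<^sup>*\<^sup>* r a"
  shows "connected_on A (rel_on A E)"
proof -
  have "connected_on A E" by (rule conn_root[OF assms(2,3) symE])
  then show ?thesis by (rule conn_mono_rel) (simp add: rel_on_def)
qed

lemma side_conn1:
  assumes sep: "separation V E A B" and v: "A \<inter> B = {v}"
  shows "connected_on A (rel_on A E)"
proof (rule side_conn_from[OF sep])
  show "v \<in> A" using v by auto
  fix a assume "a \<in> A"
  then obtain s where "s \<in> A \<inter> B" "(rel_on A E)\<^sup>*\<^sup>* a s" using sep_reach[OF sep] by blast
  then show "(rel_on A E)\<^sup>*\<^sup>* v a" using v rel_on_sym[OF symE] by auto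
qed

lemma nbr_side:
  assumes sep: "separation V E A B" and s: "s \<in> A \<inter> B" and nn: "\<And>a. a \<in> A - B \<Longrightarrow> \<not> E s a"
  shows "separation V E (A - {s}) B"
  using assms Esym unfolding separation_def by blast

lemma side_nbr:
  assumes sep: "separation V E A B" and s: "s \<in> A \<inter> B" and small: "card (A \<inter> B) \<le> 2"
    and nosep1: "\<And>A' B'. separation V E A' B' \<Longrightarrow> card (A' \<inter> B') \<le> 1 \<Longrightarrow> False"
  shows "\<exists>a\<in>A - B. E s a"
proof (rule ccontr)
  assume "\<not> (\<exists>a\<in>A - B. E s a)"
  then have sep': "separation V E (A - {s}) B" using nbr_side[OF sep s] by blast
  have fin: "finite (A \<inter> B)" using sep_sub[OF sep] finV by (meson finite_Int finite_subset)
  have "(A - {s}) \<inter> B = (A \<inter> B) - {s}" by blast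
  then have "card ((A - {s}) \<inter> B) = card (A \<inter> B) - 1" using s fin by simp
  then have "card ((A - {s}) \<inter> B) \<le> 1" using small by simp
  then show False using nosep1[OF sep'] by blast
qed

lemma no_sep1:
  assumes sep: "separation V E A B" and c1: "card (A \<inter> B) \<le> 1"
  shows False
proof -
  have fin: "finite (A \<inter> B)" using sep_sub[OF sep] finV by (meson finite_Int finite_subset)
  obtain v where v: "A \<inter> B = {v}"
  proof -
    obtain v where "v \<in> A \<inter> B" using sep_nonempty[OF sep] by blast
    moreover have "\<forall>x\<in>A \<inter> B. \<forall>y\<in>A \<inter> B. x = y" using c1 card_le_Suc0_iff_eq[OF fin] by simp
    ultimately have "A \<inter> B = {v}" by blast
    then show ?thesis using that by blast
  qed
  have sepB: "separation V E B A" by (rule sep_sym[OF sep])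
  have AB: "A \<subseteq> V" "B \<subseteq> V" using sep_sub[OF sep] by auto
  have ne: "\<And>u w. u \<in> A - B \<Longrightarrow> w \<in> B - A \<Longrightarrow> \<not> E u w" using sep by (auto simp: separation_def)
  obtain a1 where a1: "a1 \<in> A - B" using sep by (auto simp: separation_def)
  obtain b1 where b1: "b1 \<in> B - A" using sep by (auto simp: separation_def)
  have nb0: "\<And>A' B'. separation V E A' B' \<Longrightarrow> A' \<inter> B' = {} \<Longrightarrow> False" using sep_nonempty by blast
  obtain a0 where a0: "a0 \<in> A - B" "E v a0"
  proof -
    have "\<exists>a\<in>A - B. E v a"
    proof (rule ccontr)
      assume "\<not> (\<exists>a\<in>A - B. E v a)"
      then have "separation V E (A - {v}) B" using nbr_side[OF sep] v by blast
      moreover have "(A - {v}) \<inter> B = {}" using v by blast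
      ultimately show False using nb0 by blast
    qed
    then show ?thesis using that by blast
  qed
  obtain b0 where b0: "b0 \<in> B - A" "E v b0"
  proof -
    have "\<exists>b\<in>B - A. E v b"
    proof (rule ccontr)
      assume "\<not> (\<exists>b\<in>B - A. E v b)"
      then have "separation V E (B - {v}) A" using nbr_side[OF sepB] v by blast
      moreover have "(B - {v}) \<inter> A = {}" using v by blast
      ultimately show False using nb0 by blast
    qed
    then show ?thesis using that by blast
  qed
  have vAB: "v \<in> A" "v \<in> B" using v by auto
  obtain c1 where c1: "okcol A (rel_on A E) c1 (A - {v})"
  proof -
    obtain p q where pq: "p \<noteq> q" "E b1 p" "E b1 q" using no_leaf b1 AB by blast
    have "\<exists>c. okcol A (rel_on A E) c (A - {v})"
    proof (rule P)
      show "simple_graph A (rel_on A E)" by (rule ind_simple[OF AB(1)])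
      show "connected_graph A (rel_on A E)" using side_conn1[OF sep v] by (simp add: connected_graph_def)
      show "\<not> has_K5_minor A (rel_on A E)" by (rule ind_noK5[OF AB(1)])
      show "num_edges A (rel_on A E) + 1 < num_edges V E"
        by (rule edges_out2[OF AB(1) _ _ pq(2,3,1)]) (use b1 in \<open>auto simp: rel_on_def\<close>)
      show "v \<in> A" by fact
    qed
    then show ?thesis using that by blast
  qed
  obtain c2 where c2: "okcol B (rel_on B E) c2 (B - {v})"
  proof -
    obtain p q where pq: "p \<noteq> q" "E a1 p" "E a1 q" using no_leaf a1 AB by blast
    have "B \<inter> A = {v}" using v by blast
    have "\<exists>c. okcol B (rel_on B E) c (B - {v})"
    proof (rule P)
      show "simple_graph B (rel_on B E)" by (rule ind_simple[OF AB(2)])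
      show "connected_graph B (rel_on B E)" using side_conn1[OF sepB \<open>B \<inter> A = {v}\<close>] by (simp add: connected_graph_def)
      show "\<not> has_K5_minor B (rel_on B E)" by (rule ind_noK5[OF AB(2)])
      show "num_edges B (rel_on B E) + 1 < num_edges V E"
        by (rule edges_out2[OF AB(2) _ _ pq(2,3,1)]) (use a1 in \<open>auto simp: rel_on_def\<close>)
      show "v \<in> B" by fact
    qed
    then show ?thesis using that by blast
  qed
  have c14: "c1 v < 4" using c1 vAB by (auto simp: okcol_def)
  have c24: "c2 v < 4" using c2 vAB by (auto simp: okcol_def)
  obtain p1 where p1: "perm4 p1" "p1 (c1 v) = 0" using norm1[OF c14] by blast
  obtain p2 where p2: "perm4 p2" "p2 (c2 v) = 0" using norm1[OF c24] by blast
  define d1 where "d1 = p1 \<circ> c1"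
  define d2 where "d2 = p2 \<circ> c2"
  have d1: "okcol A (rel_on A E) d1 (A - {v})" unfolding d1_def by (rule okcol_perm[OF c1 p1(1)])
  have d2: "okcol B (rel_on B E) d2 (B - {v})" unfolding d2_def by (rule okcol_perm[OF c2 p2(1)])
  have d1v: "d1 v = 0" "d2 v = 0" using p1 p2 unfolding d1_def d2_def by simp_all
  have d1a: "d1 a0 \<in> {1,2,3}"
  proof -
    have "d1 a0 < 4" using d1 a0 by (auto simp: okcol_def)
    moreover have "d1 v \<noteq> d1 a0" using d1 a0 vAB unfolding okcol_def proper_coloring_def rel_on_def by blast
    ultimately show ?thesis using d1v by auto
  qed
  have d2b: "d2 b0 \<in> {1,2,3}"
  proof -
    have "d2 b0 < 4" using d2 b0 by (auto simp: okcol_def)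
    moreover have "d2 v \<noteq> d2 b0" using d2 b0 vAB unfolding okcol_def proper_coloring_def rel_on_def by blast
    ultimately show ?thesis using d1v by auto
  qed
  obtain s where s: "perm4 s" "s 0 = 0" "s (d2 b0) \<noteq> d1 a0" using rot_ok[OF d2b d2b d1a d1a] by blast
  define d2' where "d2' = s \<circ> d2"
  have d2': "okcol B (rel_on B E) d2' (B - {v})" unfolding d2'_def by (rule okcol_perm[OF d2 s(1)])
  show False
  proof (rule glue[OF sep])
    show "okcol A (rel_on A E) d1 (A - B)" using d1 v unfolding okcol_def by auto
    show "okcol B (rel_on B E) d2' (B - A)" using d2' v unfolding okcol_def by auto
    show "\<And>z. z \<in> A \<inter> B \<Longrightarrow> d1 z = d2' z" using v d1v s unfolding d2'_def by simp
    fix x assume "x \<in> A \<inter> B"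
    then have xv: "x = v" using v by blast
    have "gl A d1 d2' a0 = d1 a0" using a0 by (simp add: gl_A)
    moreover have "gl A d1 d2' b0 = s (d2 b0)" using b0 by (simp add: gl_B d2'_def)
    ultimately have "gl A d1 d2' a0 \<noteq> gl A d1 d2' b0" using s by simp
    then show "happy V E (gl A d1 d2') x" using happy_pair[of a0 V b0 E x] a0 b0 xv AB by blast
  qed
qed

lemma conn_minus:
  assumes v: "v \<in> V" shows "connected_on (V - {v}) E"
proof -
  have "V - {v} \<noteq> {}"
  proof
    assume "V - {v} = {}"
    then have "V \<subseteq> {v}" by blast
    then have "card V \<le> card {v}" by (rule card_mono[rotated]) simp
    then show False using card5 by simp
  qed
  then obtain u0 where u0: "u0 \<in> V - {v}" by blast
  let ?R = "reach (V - {v}) E u0"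
  have Rsub: "?R \<subseteq> V - {v}" by (rule reach_sub[OF u0])
  show ?thesis
  proof (cases "?R = V - {v}")
    case True
    then show ?thesis using reach_conn[OF u0 symE] by simp
  next
    case False
    have "separation V E (V - ?R) (?R \<union> {v})" unfolding separation_def
    proof (intro conjI ballI)
      show "V - ?R \<union> (?R \<union> {v}) = V" using Rsub v by blast
      show "V - ?R - (?R \<union> {v}) \<noteq> {}" using False Rsub by blast
      show "?R \<union> {v} - (V - ?R) \<noteq> {}" using reach_self[of u0] Rsub by blast
      fix x y assume x: "x \<in> V - ?R - (?R \<union> {v})" and y: "y \<in> ?R \<union> {v} - (V - ?R)"
      show "\<not> E x y"
      proof
        assume "E x y"
        then have "E y x" by (rule Esym)
        moreover have "y \<in> ?R" using y Rsub v by auto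
        ultimately have "x \<in> ?R" using reach_closed[OF u0] x by blast
        then show False using x by blast
      qed
    qed
    moreover have "(V - ?R) \<inter> (?R \<union> {v}) = {v}" using v Rsub by blast
    ultimately show ?thesis using no_sep1[of "V - ?R" "?R \<union> {v}"] by simp
  qed
qed

end

lemma C5_two:
  assumes "simple_graph H F" "iso_C5 H F" "u \<in> H"
  shows "\<exists>a b. a \<noteq> b \<and> F u a \<and> F u b"
  using C5_nbrs[OF assms] by blast

lemma C5_no3:
  assumes "simple_graph H F" "iso_C5 H F" "u \<in> H" "F u s1" "F u s2" "F u s3"
  shows "s1 = s2 \<or> s1 = s3 \<or> s2 = s3"
proof -
  obtain a b where ab: "\<forall>z. F u z \<longleftrightarrow> z = a \<or> z = b" using C5_nbrs[OF assms(1-3)] by blast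
  then have "s1 = a \<or> s1 = b" "s2 = a \<or> s2 = b" "s3 = a \<or> s3 = b" using assms(4-6) by blast+
  then show ?thesis by auto
qed

context mincex
begin

lemma side_conn2:
  assumes sep: "separation V E A B" and xy: "A \<inter> B = {x, y}"
    and xa: "\<exists>a\<in>A - B. E x a"
  shows "connected_on A (rel_on A E)"
proof -
  have AV: "A \<subseteq> V" "B \<subseteq> V" using sep_sub[OF sep] by auto
  have xA: "x \<in> A" "y \<in> A" "x \<in> B" "y \<in> B" using xy by auto
  have ne: "\<And>u w. u \<in> A - B \<Longrightarrow> w \<in> B - A \<Longrightarrow> \<not> E u w" using sep by (auto simp: separation_def)
  have AB: "A \<union> B = V" using sep by (simp add: separation_def)
  let ?R = "reach A E x"
  have Rsub: "?R \<subseteq> A" by (rule reach_sub[OF xA(1)])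
  have yR: "y \<in> ?R"
  proof (rule ccontr)
    assume yn: "y \<notin> ?R"
    obtain a where a: "a \<in> A - B" "E x a" using xa by blast
    have aA: "a \<in> A" using a by blast
    have aR: "a \<in> ?R" using reach_closed[OF xA(1) reach_self[of x A E] aA a(2)] .
    have "separation V E ?R ((V - ?R) \<union> {x})" unfolding separation_def
    proof (intro conjI ballI)
      show "?R \<union> (V - ?R \<union> {x}) = V" using Rsub AV xA by blast
      have "a \<noteq> x" using a xA by blast
    then show "?R - (V - ?R \<union> {x}) \<noteq> {}" using aR by blast
      have "y \<in> V" using xA AV by blast
      then show "V - ?R \<union> {x} - ?R \<noteq> {}" using yn by blast
      fix u w assume u: "u \<in> ?R - (V - ?R \<union> {x})" and w: "w \<in> V - ?R \<union> {x} - ?R"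
      show "\<not> E u w"
      proof
        assume uw: "E u w"
        have uA: "u \<in> A" "u \<noteq> x" "u \<noteq> y" using u Rsub yn by auto
        then have uAB: "u \<in> A - B" using xy by blast
        have wV: "w \<in> V" using w xA AV by blast
        have "w \<in> A"
        proof (rule ccontr)
          assume "w \<notin> A"
          then have "w \<in> B - A" using wV AB by blast
          then show False using ne[OF uAB] uw by blast
        qed
        then have "w \<in> ?R" using reach_closed[OF xA(1)] u uw by blast
        then show False using w by blast
      qed
    qed
    moreover have "card (?R \<inter> ((V - ?R) \<union> {x})) \<le> 1"
    proof -
      have "?R \<inter> ((V - ?R) \<union> {x}) \<subseteq> {x}" by blast
      then have "card (?R \<inter> ((V - ?R) \<union> {x})) \<le> card {x}" by (rule card_mono[rotated]) simp
      then show ?thesis by simp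
    qed
    ultimately show False by (rule no_sep1)
  qed
  have xy_path: "(rel_on A E)\<^sup>*\<^sup>* x y" using yR by (simp add: reach_def)
  show ?thesis
  proof (rule side_conn_from[OF sep xA(1)])
    fix a assume "a \<in> A"
    then obtain s where s: "s \<in> A \<inter> B" "(rel_on A E)\<^sup>*\<^sup>* a s" using sep_reach[OF sep] by blast
    then have sa: "(rel_on A E)\<^sup>*\<^sup>* s a" using rel_on_sym[OF symE] by blast
    show "(rel_on A E)\<^sup>*\<^sup>* x a"
    proof (cases "s = x")
      case True then show ?thesis using sa by simp
    next
      case False then have "s = y" using s xy by blast
      then show ?thesis using xy_path sa by (meson rtranclp_trans)
    qed
  qed
qed

lemma chain:
  assumes a12: "a1 \<noteq> a2" and pq: "p \<noteq> q"
    and n1: "\<And>z. E a1 z \<longleftrightarrow> z = p \<or> z = a2"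
    and n2: "\<And>z. E a2 z \<longleftrightarrow> z = a1 \<or> z = q"
    and u12: "u1 \<noteq> u2" "u1 \<noteq> a1" "u2 \<noteq> a1" "E p u1" "E p u2"
  shows False
proof -
  have a1V: "a1 \<in> V" using Ein n1[of a2] by blast
  have a2V: "a2 \<in> V" using Ein n2[of a1] by blast
  have pa2: "p \<noteq> a2"
  proof
    assume pa: "p = a2"
    obtain s t where st: "s \<noteq> t" "E a1 s" "E a1 t" using no_leaf[OF a1V] by blast
    have "s = a2" "t = a2" using n1[of s] n1[of t] st pa by auto
    then show False using st by simp
  qed
  have qa1: "q \<noteq> a1"
  proof
    assume qa: "q = a1"
    obtain s t where st: "s \<noteq> t" "E a2 s" "E a2 t" using no_leaf[OF a2V] by blast
    have "s = a1" "t = a1" using n2[of s] n2[of t] st qa by auto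
    then show False using st by simp
  qed
  have pa1: "p \<noteq> a1" using Eirr n1[of p] by blast
  have qa2: "q \<noteq> a2" using Eirr n2[of q] by blast
  have pV: "p \<in> V" "q \<in> V" using Ein n1[of p] n2[of q] by blast+
  define F where "F u v \<longleftrightarrow> E u v \<and> \<not> (u = p \<and> v = a1) \<and> \<not> (u = a1 \<and> v = p)" for u v
  have FE: "\<And>u v. F u v \<Longrightarrow> E u v" unfolding F_def by simp
  have sgF: "simple_graph V F"
  proof (rule sg_intro[OF finV])
    fix u v assume "F u v"
    then show "u \<in> V \<and> v \<in> V \<and> u \<noteq> v \<and> F v u" unfolding F_def using Ein Eirr Esym by blast
  qed
  have connF: "connected_graph V F"
  proof -
    have c1: "connected_on (V - {a1}) F"
      by (rule conn_mono_rel[OF conn_minus[OF a1V]]) (auto simp: F_def)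
    have "connected_on ((V - {a1}) \<union> {a1}) F"
    proof (rule conn_union_edge[OF c1 conn_single])
      show "a2 \<in> V - {a1}" using a2V a12 by simp
      show "a1 \<in> {a1}" by simp
      show "F a2 a1" unfolding F_def using n2 pa2 by auto
      show "symm F" by (rule sg_symm[OF sgF])
    qed
    moreover have "(V - {a1}) \<union> {a1} = V" using a1V by blast
    ultimately show ?thesis by (simp add: connected_graph_def)
  qed
  have nKF: "\<not> has_K5_minor V F" by (rule sub_noK5) (auto simp: F_def)
  have nCF: "\<not> iso_C5 V F"
  proof
    assume "iso_C5 V F"
    then obtain s t where "s \<noteq> t" "F a1 s" "F a1 t" using C5_two[OF sgF _ a1V] by blast
    then show False unfolding F_def using n1 by auto
  qed
  have edF: "num_edges V F < num_edges V E"
  proof -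
    have sub: "edge_set V F \<subseteq> edge_set V E" unfolding edge_set_def F_def by blast
    have "{p, a1} \<in> edge_set V E" unfolding edge_set_def using n1[of p] Esym pV a1V by blast
    moreover have "{p, a1} \<notin> edge_set V F"
    proof
      assume "{p, a1} \<in> edge_set V F"
      then obtain u v where "{p, a1} = {u, v}" "F u v" unfolding edge_set_def by blast
      then show False unfolding F_def by (metis doubleton_eq_iff)
    qed
    ultimately have "edge_set V F \<subset> edge_set V E" using sub by blast
    then show ?thesis unfolding num_edges_def by (rule psubset_card_mono[OF finite_edge_set[OF finV]])
  qed
  obtain c where c: "okcol V F c V" using M[OF sgF connF nKF nCF edF] by blast
  obtain r where r: "E q r" "r \<noteq> a2"
  proof -
    obtain s t where "s \<noteq> t" "E q s" "E q t" using no_leaf pV by blast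
    then show ?thesis using that by blast
  qed
  have ra1: "r \<noteq> a1"
  proof
    assume "r = a1"
    then have "E a1 q" using r Esym by simp
    then show False using n1 pq qa2 by auto
  qed
  obtain t2 where t2: "t2 < 4" "t2 \<noteq> c p" "t2 \<noteq> c q" "t2 \<noteq> c r" using avoid3 by blast
  obtain t1 where t1: "t1 < 4" "t1 \<noteq> c p" "t1 \<noteq> t2" "t1 \<noteq> c q" using avoid3 by blast
  define c' where "c' = c(a1 := t1, a2 := t2)"
  have c4: "\<forall>z\<in>V. c z < 4" and cpr: "proper_coloring V F c" and chp: "\<forall>z\<in>V. happy V F c z"
    using c by (auto simp: okcol_def)
  have c'a1: "c' a1 = t1" and c'a2: "c' a2 = t2" unfolding c'_def using a12 by auto
  have c'o: "\<And>z. z \<noteq> a1 \<Longrightarrow> z \<noteq> a2 \<Longrightarrow> c' z = c z" unfolding c'_def by simp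
  have "okcol V E c' V" unfolding okcol_def
  proof (intro conjI ballI)
    fix z assume "z \<in> V" then show "c' z < 4" using c4 t1 t2 unfolding c'_def by auto
  next
    show "proper_coloring V E c'" unfolding proper_coloring_def
    proof (intro ballI impI)
      fix u v assume uv: "u \<in> V" "v \<in> V" "E u v"
      have key: "c' u \<noteq> c' v" if "E u v" "u = a1 \<or> u = a2" for u v
      proof -
        from that(2) show ?thesis
        proof
          assume "u = a1"
          then have "v = p \<or> v = a2" using n1 that(1) by simp
          then show ?thesis using \<open>u = a1\<close> c'a1 c'a2 c'o[of p] pa1 pa2 t1 by auto
        next
          assume "u = a2"
          then have "v = a1 \<or> v = q" using n2 that(1) by simp
          then show ?thesis using \<open>u = a2\<close> c'a1 c'a2 c'o[of q] qa1 qa2 t1 t2 by auto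
        qed
      qed
      show "c' u \<noteq> c' v"
      proof (cases "u = a1 \<or> u = a2")
        case True then show ?thesis using key uv by blast
      next
        case u: False
        show ?thesis
        proof (cases "v = a1 \<or> v = a2")
          case True then show ?thesis using key[of v u] uv Esym by auto
        next
          case False
          then have "F u v" unfolding F_def using uv u by auto
          then show ?thesis using cpr uv u False c'o unfolding proper_coloring_def by auto
        qed
      qed
    qed
  next
    fix u assume u: "u \<in> V"
    show "happy V E c' u"
    proof (cases "u = a1")
      case True
      have "c' p \<noteq> c' a2" using c'o[of p] pa1 pa2 c'a2 t2 by simp
      then show ?thesis using happy_pair[of p V a2 E u c'] True n1 pV a2V by blast
    next
      case ua1: False
      show ?thesis
      proof (cases "u = a2")
        case True
        have "c' a1 \<noteq> c' q" using c'o[of q] qa1 qa2 c'a1 t1 by simp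
        then show ?thesis using happy_pair[of a1 V q E u c'] True n2 pV a1V by blast
      next
        case ua2: False
        show ?thesis
        proof (cases "u = q")
          case True
          have rV: "r \<in> V" using Ein r by blast
          have "c' r \<noteq> c' a2" using c'o[of r] ra1 r c'a2 t2 by simp
          moreover have "E q a2" using n2 Esym by blast
          ultimately show ?thesis using happy_pair[of r V a2 E u c'] True r rV a2V by blast
        next
          case uq: False
          show ?thesis
          proof (cases "u = p")
            case True
            have u1V: "u1 \<in> V" "u2 \<in> V" using Ein u12 by blast+
            have "F p u1" "F p u2" unfolding F_def using u12 by auto
            then obtain s1 s2 where s: "s1 \<in> V" "s2 \<in> V" "F p s1" "F p s2" "c s1 \<noteq> c s2"
              using happy_get_pair[of V F c p u1 u2] chp pV u1V u12 finV by blast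
            have sa: "s1 \<noteq> a1" "s2 \<noteq> a1" using s unfolding F_def by auto
            have sb: "s1 \<noteq> a2" "s2 \<noteq> a2"
            proof -
              show "s1 \<noteq> a2"
              proof
                assume "s1 = a2" then have "E a2 p" using s FE Esym by blast
                then show False using n2 pa1 pq by auto
              qed
              show "s2 \<noteq> a2"
              proof
                assume "s2 = a2" then have "E a2 p" using s FE Esym by blast
                then show False using n2 pa1 pq by auto
              qed
            qed
            have "c' s1 \<noteq> c' s2" using s sa sb c'o by simp
            then show ?thesis using happy_pair[of s1 V s2 E u c'] s FE True by blast
          next
            case up: False
            have nb: "neighbors V E u = neighbors V F u"
              unfolding neighbors_def F_def using up ua1 by auto
            show ?thesis
            proof (rule happy_transfer[OF _ nb])
              show "happy V F c u" using chp u by blast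
              fix z assume "z \<in> neighbors V F u"
              then have "E u z" unfolding neighbors_def F_def by simp
              then have "z \<noteq> a1" "z \<noteq> a2" using n1[of u] n2[of u] Esym[of u z] up uq ua1 ua2 by auto
              then show "c' z = c z" by (rule c'o)
            qed
          qed
        qed
      qed
    qed
  qed
  then show False by (rule colorable_contra)
qed

end

context mincex
begin

lemma gl_onB: "z \<in> B \<Longrightarrow> (\<And>z. z \<in> A \<inter> B \<Longrightarrow> d1 z = d2 z) \<Longrightarrow> gl A d1 d2 z = d2 z"
  unfolding gl_def by auto

lemma sep2_nbr:
  assumes sep: "separation V E A B" and xy: "A \<inter> B = {x, y}" and s: "s \<in> {x, y}"
  shows "\<exists>a\<in>A - B. E s a"
proof (rule side_nbr[OF sep])
  show "s \<in> A \<inter> B" using xy s by simp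
  show "card (A \<inter> B) \<le> 2" unfolding xy by (simp add: card_insert_if)
  show "\<And>A' B'. separation V E A' B' \<Longrightarrow> card (A' \<inter> B') \<le> 1 \<Longrightarrow> False" by (rule no_sep1)
qed

lemma sep2_conn:
  assumes sep: "separation V E A B" and xy: "A \<inter> B = {x, y}"
  shows "connected_on A (rel_on A E)"
  using side_conn2[OF sep xy] sep2_nbr[OF sep xy] by simp

lemma sep2_edges:
  assumes sep: "separation V E A B"
  shows "num_edges A (rel_on A E) + 1 < num_edges V E"
proof -
  obtain b where b: "b \<in> B - A" using sep by (auto simp: separation_def)
  have AV: "A \<subseteq> V" "B \<subseteq> V" using sep_sub[OF sep] by auto
  obtain p q where pq: "p \<noteq> q" "E b p" "E b q" using no_leaf b AV by blast
  show ?thesis by (rule edges_out2[OF AV(1) _ _ pq(2,3,1)]) (use b in \<open>auto simp: rel_on_def\<close>)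
qed

lemma sep2_P:
  assumes sep: "separation V E A B" and xy: "A \<inter> B = {x, y}" and s: "s \<in> {x, y}"
  shows "\<exists>c. okcol A (rel_on A E) c (A - {s})"
proof (rule P)
  have AV: "A \<subseteq> V" using sep_sub[OF sep] by auto
  show "simple_graph A (rel_on A E)" by (rule ind_simple[OF AV])
  show "connected_graph A (rel_on A E)" using sep2_conn[OF sep xy] by (simp add: connected_graph_def)
  show "\<not> has_K5_minor A (rel_on A E)" by (rule ind_noK5[OF AV])
  show "num_edges A (rel_on A E) + 1 < num_edges V E" by (rule sep2_edges[OF sep])
  show "s \<in> A" using xy s by auto
qed

lemma okcol_sub: "okcol A F c U \<Longrightarrow> U' \<subseteq> U \<Longrightarrow> okcol A F c U'"
  unfolding okcol_def by auto

lemma okcol_colors: "okcol A F c U \<Longrightarrow> z \<in> A \<Longrightarrow> c z < 4"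
  unfolding okcol_def by auto

lemma okcol_proper: "okcol A (rel_on A E) c U \<Longrightarrow> u \<in> A \<Longrightarrow> v \<in> A \<Longrightarrow> E u v \<Longrightarrow> c u \<noteq> c v"
  unfolding okcol_def proper_coloring_def rel_on_def by auto

lemma okcol_pair:
  assumes c: "okcol A (rel_on A E) c U" and xU: "x \<in> U" and xA: "x \<in> A" and AV: "A \<subseteq> V"
    and ab: "a \<in> A" "b \<in> A" "a \<noteq> b" "E x a" "E x b"
  shows "\<exists>s1\<in>A. \<exists>s2\<in>A. E x s1 \<and> E x s2 \<and> c s1 \<noteq> c s2"
proof -
  have h: "happy A (rel_on A E) c x" using c xU unfolding okcol_def by auto
  have fin: "finite A" using finV AV by (rule finite_subset[rotated])
  have "rel_on A E x a" "rel_on A E x b" using ab xA by (auto simp: rel_on_def)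
  then obtain p q where "p \<in> A" "q \<in> A" "rel_on A E x p" "rel_on A E x q" "c p \<noteq> c q"
    using happy_get_pair[OF h fin ab(1,2,3)] by blast
  then show ?thesis unfolding rel_on_def by blast
qed

lemma caseI:
  assumes sep: "separation V E A B" and xy: "A \<inter> B = {x, y}" and xny: "x \<noteq> y" and exy: "E x y"
  shows False
proof -
  have sepB: "separation V E B A" by (rule sep_sym[OF sep])
  have xyB: "B \<inter> A = {x, y}" using xy by blast
  have AV: "A \<subseteq> V" "B \<subseteq> V" using sep_sub[OF sep] by auto
  have xin: "x \<in> A" "y \<in> A" "x \<in> B" "y \<in> B" using xy by auto
  obtain c1 where c1: "okcol A (rel_on A E) c1 (A - {x})" using sep2_P[OF sep xy] by blast
  obtain c2 where c2: "okcol B (rel_on B E) c2 (B - {y})" using sep2_P[OF sepB xyB] by blast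
  have "c1 x \<noteq> c1 y" by (rule okcol_proper[OF c1 xin(1,2) exy])
  then obtain p1 where p1: "perm4 p1" "p1 (c1 x) = 0" "p1 (c1 y) = 1"
    using norm2 okcol_colors[OF c1] xin by metis
  have "c2 x \<noteq> c2 y" by (rule okcol_proper[OF c2 xin(3,4) exy])
  then obtain p2 where p2: "perm4 p2" "p2 (c2 x) = 0" "p2 (c2 y) = 1"
    using norm2 okcol_colors[OF c2] xin by metis
  define d1 where "d1 = p1 \<circ> c1"
  define d2 where "d2 = p2 \<circ> c2"
  have d1: "okcol A (rel_on A E) d1 (A - {x})" unfolding d1_def by (rule okcol_perm[OF c1 p1(1)])
  have d2: "okcol B (rel_on B E) d2 (B - {y})" unfolding d2_def by (rule okcol_perm[OF c2 p2(1)])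
  have agree: "\<And>z. z \<in> A \<inter> B \<Longrightarrow> d1 z = d2 z" using xy p1 p2 unfolding d1_def d2_def by auto
  show False
  proof (rule glue[OF sep])
    show "okcol A (rel_on A E) d1 (A - B)" by (rule okcol_sub[OF d1]) (use xin in auto)
    show "okcol B (rel_on B E) d2 (B - A)" by (rule okcol_sub[OF d2]) (use xin in auto)
    show "\<And>z. z \<in> A \<inter> B \<Longrightarrow> d1 z = d2 z" by (rule agree)
    fix s assume s: "s \<in> A \<inter> B"
    then have "s = x \<or> s = y" using xy by blast
    then show "happy V E (gl A d1 d2) s"
    proof
      assume sx: "s = x"
      obtain b where b: "b \<in> B - A" "E x b" using sep2_nbr[OF sepB xyB, of x] by auto
      have yb: "y \<noteq> b" using b xin by blast
      have xB: "x \<in> B - {y}" using xin xny by blast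
      have bB: "b \<in> B" using b by blast
      obtain s1 s2 where ss: "s1 \<in> B" "s2 \<in> B" "E x s1" "E x s2" "d2 s1 \<noteq> d2 s2"
        using okcol_pair[OF d2 xB xin(3) AV(2) xin(4) bB yb exy b(2)] by blast
      have "gl A d1 d2 s1 \<noteq> gl A d1 d2 s2" using ss gl_onB[of _ B A d1 d2] agree by metis
      then show ?thesis using happy_pair[of s1 V s2 E s] ss AV sx by blast
    next
      assume sy: "s = y"
      obtain a where a: "a \<in> A - B" "E y a" using sep2_nbr[OF sep xy, of y] by auto
      have xa: "x \<noteq> a" using a xin by blast
      have eyx: "E y x" using Esym[OF exy] .
      have yA: "y \<in> A - {x}" using xin xny by blast
      have aA: "a \<in> A" using a by blast
      obtain s1 s2 where ss: "s1 \<in> A" "s2 \<in> A" "E y s1" "E y s2" "d1 s1 \<noteq> d1 s2"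
        using okcol_pair[OF d1 yA xin(2) AV(1) xin(1) aA xa eyx a(2)] by blast
      have "gl A d1 d2 s1 \<noteq> gl A d1 d2 s2" using ss gl_A by metis
      then show ?thesis using happy_pair[of s1 V s2 E s] ss AV sy by blast
    qed
  qed
qed

end

context mincex
begin

lemma caseIIa_C5:
  assumes sep: "separation V E A B" and xy: "A \<inter> B = {x, y}" and xny: "x \<noteq> y"
    and cB: "card (B - A) \<ge> 2" and w: "w \<in> B - A" and wn: "\<And>z. E w z \<longleftrightarrow> z = x \<or> z = y"
    and c5: "iso_C5 (insert w A) (rel_on (insert w A) E)"
  shows False
proof -
  let ?A' = "insert w A"
  let ?T = "rel_on ?A' E"
  have AV: "A \<subseteq> V" "B \<subseteq> V" using sep_sub[OF sep] by auto
  have AB: "A \<union> B = V" and ne: "\<And>u v. u \<in> A - B \<Longrightarrow> v \<in> B - A \<Longrightarrow> \<not> E u v"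
    using sep by (auto simp: separation_def)
  have xin: "x \<in> A" "y \<in> A" "x \<in> B" "y \<in> B" using xy by auto
  have wA: "w \<notin> A" "w \<in> V" using w AV by auto
  have A'V: "?A' \<subseteq> V" using AV wA by blast
  have sgT: "simple_graph ?A' ?T" by (rule ind_simple[OF A'V])
  have finA: "finite A" using finV AV by (meson finite_subset)
  have cardA': "card ?A' = 5"
  proof -
    obtain f :: "nat \<Rightarrow> 'a" where "bij_betw f {0..<5} ?A'" using c5 unfolding iso_C5_def by blast
    then show ?thesis by (simp add: bij_betw_same_card[symmetric])
  qed
  have "card ?A' = card A + 1" using wA finA by simp
  moreover have "A = (A - B) \<union> {x, y}" using xy by blast
  moreover have "card ((A - B) \<union> {x, y}) = card (A - B) + 2"
  proof -
    have "card ((A - B) \<union> {x, y}) = card (A - B) + card {x, y}"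
      by (rule card_Un_disjoint) (use finA xy in auto)
    then show ?thesis using xny by simp
  qed
  ultimately have "card (A - B) = 2" using cardA' by simp
  then obtain a1 a2 where a12: "A - B = {a1, a2}" "a1 \<noteq> a2" by (meson card_2_iff)
  have aA: "a1 \<in> A - B" "a2 \<in> A - B" using a12 by auto
  have aneq: "a1 \<noteq> x" "a1 \<noteq> y" "a2 \<noteq> x" "a2 \<noteq> y" "a1 \<noteq> w" "a2 \<noteq> w" using aA xin wA by auto
  have TE: "\<And>a z. a \<in> A - B \<Longrightarrow> ?T a z \<longleftrightarrow> E a z"
  proof -
    fix a z assume a: "a \<in> A - B"
    show "?T a z \<longleftrightarrow> E a z"
    proof
      assume "?T a z" then show "E a z" by (simp add: rel_on_def)
    next
      assume az: "E a z"
      have "z \<in> A"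
      proof (rule ccontr)
        assume "z \<notin> A"
        then have "z \<in> B - A" using az Ein AB by blast
        then show False using ne[OF a] az by blast
      qed
      then show "?T a z" using a az by (auto simp: rel_on_def)
    qed
  qed
  have A'eq: "?A' = {a1, a2, x, y, w}" using a12 xy by blast
  have nbA: "\<And>a z. a \<in> A - B \<Longrightarrow> E a z \<Longrightarrow> z \<in> {a1, a2, x, y} - {a}"
  proof -
    fix a z assume a: "a \<in> A - B" and az: "E a z"
    have "?T a z" using TE[OF a] az by simp
    then have "z \<in> ?A'" "z \<noteq> a" by (auto simp: rel_on_def dest: Eirr)
    moreover have "z \<noteq> w"
    proof
      assume "z = w" then have "E w a" using az Esym by simp
      then show False using wn a xin by auto
    qed
    ultimately show "z \<in> {a1, a2, x, y} - {a}" using A'eq by blast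
  qed
  have xw: "E x w" "E y w" using wn Esym by blast+
  have Tx: "\<And>z. ?T x z \<longleftrightarrow> E x z \<and> z \<in> ?A'" "\<And>z. ?T y z \<longleftrightarrow> E y z \<and> z \<in> ?A'"
    using xin by (auto simp: rel_on_def)
  have no3: "\<And>u s1 s2 s3. u \<in> ?A' \<Longrightarrow> ?T u s1 \<Longrightarrow> ?T u s2 \<Longrightarrow> ?T u s3 \<Longrightarrow> s1 = s2 \<or> s1 = s3 \<or> s2 = s3"
    using C5_no3[OF sgT c5] by blast
  have a1a2: "E a1 a2"
  proof (rule ccontr)
    assume n: "\<not> E a1 a2"
    have both: "E a x \<and> E a y" if a: "a \<in> A - B" and na: "\<And>b. b \<in> A - B \<Longrightarrow> b \<noteq> a \<Longrightarrow> \<not> E a b" for a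
    proof -
      obtain s t where st: "s \<noteq> t" "?T a s" "?T a t" using C5_two[OF sgT c5] a by blast
      have "E a s" "E a t" using st TE a by auto
      then have "s \<in> {a1, a2, x, y} - {a}" "t \<in> {a1, a2, x, y} - {a}" using nbA a by auto
      moreover have "s \<notin> A - B" using na[of s] \<open>E a s\<close> Eirr[of a s] by auto
      moreover have "t \<notin> A - B" using na[of t] \<open>E a t\<close> Eirr[of a t] by auto
      ultimately have "s \<in> {x, y}" "t \<in> {x, y}" using a12 by auto
      then show ?thesis using st(1) \<open>E a s\<close> \<open>E a t\<close> by auto
    qed
    have "E a1 x \<and> E a1 y" by (rule both[OF aA(1)]) (use n a12 in auto)
    moreover have "E a2 x \<and> E a2 y" by (rule both[OF aA(2)]) (use n a12 Esym in auto)
    ultimately have "?T x w" "?T x a1" "?T x a2" using Tx xw Esym A'eq by auto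
    then show False using no3[of x w a1 a2] aneq a12 A'eq by auto
  qed
  have other: "\<exists>p. p \<in> {x, y} \<and> (\<forall>z. E a z \<longleftrightarrow> z = p \<or> z = a')"
    if a: "a \<in> A - B" and a': "a' \<in> A - B" "a' \<noteq> a" "E a a'" for a a'
  proof -
    obtain \<alpha> \<beta> where ab: "\<alpha> \<noteq> \<beta>" "\<forall>z. ?T a z \<longleftrightarrow> z = \<alpha> \<or> z = \<beta>"
      using C5_nbrs[OF sgT c5] a by blast
    have Ea: "\<And>z. E a z \<longleftrightarrow> z = \<alpha> \<or> z = \<beta>" using ab(2) TE[OF a] by simp
    have "a' = \<alpha> \<or> a' = \<beta>" using Ea a'(3) by simp
    then obtain p where p: "\<And>z. E a z \<longleftrightarrow> z = p \<or> z = a'" "p \<noteq> a'" using Ea ab(1) by metis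
    have "E a p" using p by simp
    then have "p \<in> {a1, a2, x, y} - {a}" using nbA a by blast
    moreover have "p \<noteq> a" using \<open>E a p\<close> Eirr by blast
    moreover have "p \<notin> A - B" using p(2) calculation(2) a a' a12 by auto
    ultimately have "p \<in> {x, y}" using a12 by blast
    then show ?thesis using p by blast
  qed
  obtain p where p: "p \<in> {x, y}" "\<And>z. E a1 z \<longleftrightarrow> z = p \<or> z = a2"
    using other[OF aA(1) aA(2) _ a1a2] a12 by blast
  obtain q where q: "q \<in> {x, y}" "\<And>z. E a2 z \<longleftrightarrow> z = q \<or> z = a1"
    using other[OF aA(2) aA(1) _ Esym[OF a1a2]] a12 by blast
  have pq: "p \<noteq> q"
  proof
    assume "p = q"
    have "E p a1" "E p a2" using p(2) q(2) \<open>p = q\<close> Esym by blast+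
    moreover have "E p w" using p xw by auto
    ultimately have "?T p w" "?T p a1" "?T p a2" using p A'eq xin by (auto simp: rel_on_def)
    then show False using no3[of p w a1 a2] aneq a12 p A'eq by auto
  qed
  obtain t u where tu: "t \<in> B - A - {w}" "u \<in> V - (B - A - {w})" "E t u"
  proof -
    have "B - A - {w} \<noteq> {}"
    proof
      assume "B - A - {w} = {}"
      then have "B - A \<subseteq> {w}" by blast
      then have "card (B - A) \<le> card {w}" by (rule card_mono[rotated]) simp
      then show False using cB by simp
    qed
    moreover have "V - (B - A - {w}) \<noteq> {}" using xin AV by blast
    ultimately show ?thesis using edge_leaving[OF connV, of "B - A - {w}"] AV that by blast
  qed
  have tA: "t \<notin> A" "t \<noteq> w" "t \<in> V" using tu AV by auto
  have ux: "u \<in> {x, y}"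
  proof -
    have "u \<in> B"
    proof (rule ccontr)
      assume "u \<notin> B" then have "u \<in> A - B" using tu AB by blast
      then show False using ne tu Esym by blast
    qed
    moreover have "u \<noteq> w"
    proof
      assume "u = w" then have "E w t" using tu Esym by simp
      then show False using wn tA xin by auto
    qed
    ultimately show ?thesis using tu xy by blast
  qed
  have Eut: "E u t" using tu Esym by simp
  have "u = p \<or> u = q" using ux p(1) q(1) pq by auto
  then show False
  proof
    assume "u = p"
    show False
    proof (rule chain[OF a12(2) pq p(2)])
      show "\<And>z. E a2 z \<longleftrightarrow> z = a1 \<or> z = q" using q(2) by blast
      show "w \<noteq> t" using tA by simp
      show "w \<noteq> a1" using aneq by simp
      show "t \<noteq> a1" using tA aA by blast
      show "E p w" using p(1) xw by auto
      show "E p t" using Eut \<open>u = p\<close> by simp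
    qed
  next
    assume "u = q"
    show False
    proof (rule chain[OF a12(2)[symmetric] pq[symmetric] q(2)])
      show "\<And>z. E a1 z \<longleftrightarrow> z = a2 \<or> z = p" using p(2) by blast
      show "w \<noteq> t" using tA by simp
      show "w \<noteq> a2" using aneq by simp
      show "t \<noteq> a2" using tA aA by blast
      show "E q w" using q(1) xw by auto
      show "E q t" using Eut \<open>u = q\<close> by simp
    qed
  qed
qed

end

context mincex
begin

lemma caseIIa:
  assumes sep: "separation V E A B" and xy: "A \<inter> B = {x, y}" and xny: "x \<noteq> y"
    and cB: "card (B - A) \<ge> 2" and w: "w \<in> B - A" and wn: "\<And>z. E w z \<longleftrightarrow> z = x \<or> z = y"
  shows False
proof -
  let ?A' = "insert w A"
  let ?T = "rel_on ?A' E"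
  have sepB: "separation V E B A" by (rule sep_sym[OF sep])
  have xyB: "B \<inter> A = {x, y}" using xy by blast
  have AV: "A \<subseteq> V" "B \<subseteq> V" using sep_sub[OF sep] by auto
  have AB: "A \<union> B = V" and ne: "\<And>u v. u \<in> A - B \<Longrightarrow> v \<in> B - A \<Longrightarrow> \<not> E u v"
    using sep by (auto simp: separation_def)
  have xin: "x \<in> A" "y \<in> A" "x \<in> B" "y \<in> B" using xy by auto
  have wA: "w \<notin> A" "w \<in> V" "w \<in> B" using w AV by auto
  have A'V: "?A' \<subseteq> V" using AV wA by blast
  have xw: "E x w" "E y w" "E w x" "E w y" using wn Esym by blast+
  have nc5: "\<not> iso_C5 ?A' ?T" using caseIIa_C5[OF sep xy xny cB w wn] by blast
  obtain c1 where c1: "okcol ?A' ?T c1 ?A'"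
  proof -
    have "\<exists>c. okcol ?A' ?T c ?A'"
    proof (rule M)
      show "simple_graph ?A' ?T" by (rule ind_simple[OF A'V])
      have "connected_on A E" by (rule conn_mono_rel[OF sep2_conn[OF sep xy]]) (simp add: rel_on_def)
      then have "connected_on (A \<union> {w}) E" by (rule conn_union_edge[OF _ conn_single xin(1) _ xw(1) symE]) simp
      moreover have "A \<union> {w} = ?A'" by blast
      ultimately have "connected_on ?A' E" by simp
      then have "connected_on ?A' ?T" by (rule conn_mono_rel) (simp add: rel_on_def)
      then show "connected_graph ?A' ?T" by (simp add: connected_graph_def)
      show "\<not> has_K5_minor ?A' ?T" by (rule ind_noK5[OF A'V])
      show "\<not> iso_C5 ?A' ?T" by fact
      obtain t where t: "t \<in> B - A - {w}"
      proof -
        have "B - A - {w} \<noteq> {}"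
        proof
          assume "B - A - {w} = {}"
          then have "B - A \<subseteq> {w}" by blast
          then have "card (B - A) \<le> card {w}" by (rule card_mono[rotated]) simp
          then show False using cB by simp
        qed
        then show ?thesis using that by blast
      qed
      obtain p where "E t p" using has_nbr t AV by blast
      then show "num_edges ?A' ?T < num_edges V E"
        by (rule edges_out1[OF A'V, rotated 2]) (use t in \<open>auto simp: rel_on_def\<close>)
    qed
    then show ?thesis using that by blast
  qed
  obtain c2 where c2: "okcol B (rel_on B E) c2 (B - {x})" using sep2_P[OF sepB xyB] by blast
  have A'x: "x \<in> ?A'" "y \<in> ?A'" "w \<in> ?A'" using xin by auto
  have c1xy: "c1 x \<noteq> c1 y"
  proof -
    obtain s1 s2 where "s1 \<in> ?A'" "s2 \<in> ?A'" "E w s1" "E w s2" "c1 s1 \<noteq> c1 s2"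
      using okcol_pair[OF c1 A'x(3) A'x(3) A'V A'x(1,2) xny xw(3,4)] by blast
    then show ?thesis using wn by auto
  qed
  have c2xy: "c2 x \<noteq> c2 y"
  proof -
    have wB: "w \<in> B - {x}" using wA xw Eirr by blast
    obtain s1 s2 where "s1 \<in> B" "s2 \<in> B" "E w s1" "E w s2" "c2 s1 \<noteq> c2 s2"
      using okcol_pair[OF c2 wB wA(3) AV(2) xin(3,4) xny xw(3,4)] by blast
    then show ?thesis using wn by auto
  qed
  have c1w: "c1 x \<noteq> c1 w" "c1 y \<noteq> c1 w" using okcol_proper[OF c1] A'x xw by auto
  have c2w: "c2 x \<noteq> c2 w" "c2 y \<noteq> c2 w" using okcol_proper[OF c2] xin wA xw by auto
  obtain p1 where p1: "perm4 p1" "p1 (c1 x) = 0" "p1 (c1 y) = 1" "p1 (c1 w) = 2"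
    using norm3[OF okcol_colors[OF c1 A'x(1)] okcol_colors[OF c1 A'x(2)] okcol_colors[OF c1 A'x(3)] c1xy c1w] by blast
  obtain p2 where p2: "perm4 p2" "p2 (c2 x) = 0" "p2 (c2 y) = 1" "p2 (c2 w) = 2"
    using norm3[OF okcol_colors[OF c2 xin(3)] okcol_colors[OF c2 xin(4)] okcol_colors[OF c2 wA(3)] c2xy c2w] by blast
  define d1 where "d1 = p1 \<circ> c1"
  define d2 where "d2 = p2 \<circ> c2"
  have d1: "okcol ?A' ?T d1 ?A'" unfolding d1_def by (rule okcol_perm[OF c1 p1(1)])
  have d2: "okcol B (rel_on B E) d2 (B - {x})" unfolding d2_def by (rule okcol_perm[OF c2 p2(1)])
  have dv: "d1 x = 0" "d1 y = 1" "d1 w = 2" "d2 x = 0" "d2 y = 1" "d2 w = 2"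
    using p1 p2 unfolding d1_def d2_def by simp_all
  have agree: "\<And>z. z \<in> A \<inter> B \<Longrightarrow> d1 z = d2 z" using xy dv by auto
  have d1A: "okcol A (rel_on A E) d1 (A - B)" unfolding okcol_def
  proof (intro conjI ballI)
    fix z assume "z \<in> A" then show "d1 z < 4" using okcol_colors[OF d1] by blast
  next
    show "proper_coloring A (rel_on A E) d1" using okcol_proper[OF d1]
      unfolding proper_coloring_def rel_on_def by blast
  next
    fix a assume a: "a \<in> A - B"
    have nb: "neighbors A (rel_on A E) a = neighbors ?A' ?T a"
    proof -
      have "\<not> E a w" using ne[OF a w] .
      then show ?thesis unfolding neighbors_def rel_on_def using a by auto
    qed
    have "happy ?A' ?T d1 a" using d1 a unfolding okcol_def by blast
    then show "happy A (rel_on A E) d1 a" using happy_transfer[of ?A' ?T d1 a A "rel_on A E" d1] nb by auto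
  qed
  have d2B: "okcol B (rel_on B E) d2 (B - A)" by (rule okcol_sub[OF d2]) (use xin in auto)
  have hap: "happy V E (gl A d1 d2) s" if s: "s \<in> {x, y}" for s
  proof -
    obtain a where a: "a \<in> A - B" "E s a" using sep2_nbr[OF sep xy s] by blast
    have sA': "s \<in> ?A'" using s A'x by auto
    have aA': "a \<in> ?A'" using a by blast
    have aw: "a \<noteq> w" using a wA by blast
    have sw: "E s w" using s xw by auto
    obtain s1 s2 where ss: "s1 \<in> ?A'" "s2 \<in> ?A'" "E s s1" "E s s2" "d1 s1 \<noteq> d1 s2"
      using okcol_pair[OF d1 sA' sA' A'V aA' A'x(3) aw a(2) sw] by blast
    obtain r where r: "r \<in> ?A'" "E s r" "d1 r \<noteq> 2" using ss by metis
    have rw: "r \<noteq> w" using r dv by auto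
    then have rA: "r \<in> A" using r by blast
    have "gl A d1 d2 r = d1 r" using rA by (rule gl_A)
    moreover have "gl A d1 d2 w = 2" using wA dv by (simp add: gl_B)
    ultimately have "gl A d1 d2 r \<noteq> gl A d1 d2 w" using r by simp
    then show ?thesis using happy_pair[of r V w E s] r sw AV rA wA by blast
  qed
  show False
  proof (rule glue[OF sep d1A d2B agree])
    fix s assume "s \<in> A \<inter> B"
    then have "s \<in> {x, y}" using xy by blast
    then show "happy V E (gl A d1 d2) s" by (rule hap)
  qed
qed

end

context mincex
begin

lemma merge_side:
  assumes sep: "separation V E A B" and xy: "A \<inter> B = {x, y}" and xny: "x \<noteq> y" and nxy: "\<not> E x y"
    and noW: "\<And>u. u \<in> A - B \<Longrightarrow> \<not> (\<forall>z. E u z \<longleftrightarrow> z = x \<or> z = y)"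
  shows "\<exists>d. okcol A (rel_on A E) d (A - B) \<and> d x = 0 \<and> d y = 0"
proof -
  have sepB: "separation V E B A" by (rule sep_sym[OF sep])
  have xyB: "B \<inter> A = {x, y}" using xy by blast
  have AV: "A \<subseteq> V" "B \<subseteq> V" using sep_sub[OF sep] by auto
  have xin: "x \<in> A" "y \<in> A" "x \<in> B" "y \<in> B" using xy by auto
  have nyx: "\<not> E y x" using nxy Esym by blast
  define MA where "MA = A - {y}"
  define \<rho> where "\<rho> z = (if z = y then x else z)" for z
  define ME where "ME u v \<longleftrightarrow> u \<in> MA \<and> v \<in> MA \<and> u \<noteq> v \<and> (E u v \<or> (u = x \<and> E y v) \<or> (v = x \<and> E u y))" for u v
  have xM: "x \<in> MA" unfolding MA_def using xin xny by simp
  have \<rho>M: "\<And>z. z \<in> A \<Longrightarrow> \<rho> z \<in> MA" unfolding \<rho>_def MA_def using xin xny by auto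
  have \<rho>id: "\<And>z. z \<in> MA \<Longrightarrow> \<rho> z = z" unfolding \<rho>_def MA_def by auto
  have key: "ME (\<rho> u) (\<rho> v)" if "rel_on A E u v" for u v
  proof -
    have uv: "u \<in> A" "v \<in> A" "E u v" "u \<noteq> v" using that Eirr by (auto simp: rel_on_def)
    show ?thesis
    proof (cases "u = y")
      case True
      then have "v \<noteq> y" "v \<noteq> x" using uv nyx by auto
      then show ?thesis using True uv xM unfolding ME_def \<rho>_def MA_def by auto
    next
      case uy: False
      show ?thesis
      proof (cases "v = y")
        case True
        then have "u \<noteq> x" using uv nxy by auto
        then show ?thesis using True uy uv xM unfolding ME_def \<rho>_def MA_def by auto
      next
        case False
        then show ?thesis using uy uv unfolding ME_def \<rho>_def MA_def by auto
      qed
    qed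
  qed
  have MV: "MA \<subseteq> V" unfolding MA_def using AV by blast
  have sgM: "simple_graph MA ME"
  proof (rule sg_intro)
    show "finite MA" using finV MV by (rule finite_subset[rotated])
    fix u v assume "ME u v"
    then show "u \<in> MA \<and> v \<in> MA \<and> u \<noteq> v \<and> ME v u" unfolding ME_def using Esym by blast
  qed
  have symM: "symm ME" by (rule sg_symm[OF sgM])
  have connM: "connected_graph MA ME"
  proof -
    have "connected_on (\<Union>((\<lambda>z. {\<rho> z}) ` A)) ME"
    proof (rule conn_image[where VH=A and F="rel_on A E"])
      show "connected_on A (rel_on A E)" by (rule sep2_conn[OF sep xy])
      show "\<And>u v. u \<in> A \<Longrightarrow> v \<in> A \<Longrightarrow> rel_on A E u v \<Longrightarrow> \<exists>p\<in>{\<rho> u}. \<exists>q\<in>{\<rho> v}. ME p q"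
        using key by blast
    qed (auto intro: conn_single symM)
    moreover have "\<Union>((\<lambda>z. {\<rho> z}) ` A) = MA"
    proof
      show "\<Union>((\<lambda>z. {\<rho> z}) ` A) \<subseteq> MA" using \<rho>M by blast
      show "MA \<subseteq> \<Union>((\<lambda>z. {\<rho> z}) ` A)"
      proof
        fix z assume "z \<in> MA"
        then have "z \<in> A" "\<rho> z = z" using \<rho>id unfolding MA_def by auto
        then show "z \<in> \<Union>((\<lambda>z. {\<rho> z}) ` A)" by force
      qed
    qed
    ultimately show ?thesis by (simp add: connected_graph_def)
  qed
  have nKM: "\<not> has_K5_minor MA ME"
  proof
    assume "has_K5_minor MA ME"
    then have "has_K5_minor V E"
    proof (rule minor_map[where \<phi>="\<lambda>z. if z = x then B else {z}"])
      have cB: "connected_on B E" by (rule conn_mono_rel[OF sep2_conn[OF sepB xyB]]) (simp add: rel_on_def)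
      show "\<And>u. u \<in> MA \<Longrightarrow> (if u = x then B else {u}) \<subseteq> V \<and> connected_on (if u = x then B else {u}) E"
        using cB AV MV conn_single by auto
      show "(if u = x then B else {u}) \<inter> (if v = x then B else {v}) = {}"
        if "u \<in> MA" "v \<in> MA" "u \<noteq> v" for u v
      proof -
        have "u \<noteq> x \<Longrightarrow> u \<notin> B" "v \<noteq> x \<Longrightarrow> v \<notin> B" using that xy unfolding MA_def by blast+
        then show ?thesis using that by auto
      qed
      show "\<exists>p\<in>(if u = x then B else {u}). \<exists>q\<in>(if v = x then B else {v}). E p q"
        if "u \<in> MA" "v \<in> MA" "ME u v" for u v
      proof -
        have uv: "u \<noteq> v" "E u v \<or> (u = x \<and> E y v) \<or> (v = x \<and> E u y)" using that unfolding ME_def by auto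
        from uv(2) show ?thesis
        proof (elim disjE conjE)
          assume "E u v" then show ?thesis using xin by auto
        next
          assume "u = x" "E y v" then show ?thesis using xin uv(1) by auto
        next
          assume "v = x" "E u y" then show ?thesis using xin uv(1) by auto
        qed
      qed
      show "symm E" by (rule symE)
    qed
    then show False using nK by simp
  qed
  have edM: "num_edges MA ME + 1 < num_edges V E"
  proof -
    have sub: "edge_set MA ME \<subseteq> (\<lambda>e. \<rho> ` e) ` edge_set A (rel_on A E)"
    proof
      fix e assume "e \<in> edge_set MA ME"
      then obtain u v where e: "e = {u, v}" "u \<in> MA" "v \<in> MA" "ME u v" unfolding edge_set_def by blast
      have uA: "u \<in> A" "v \<in> A" "u \<noteq> y" "v \<noteq> y" using e unfolding MA_def by auto
      have "E u v \<or> (u = x \<and> E y v) \<or> (v = x \<and> E u y)" using e unfolding ME_def by auto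
      then show "e \<in> (\<lambda>e. \<rho> ` e) ` edge_set A (rel_on A E)"
      proof (elim disjE conjE)
        assume "E u v"
        then have "{u, v} \<in> edge_set A (rel_on A E)" unfolding edge_set_def rel_on_def using uA by blast
        moreover have "\<rho> ` {u, v} = e" using e uA unfolding \<rho>_def by auto
        ultimately show ?thesis by blast
      next
        assume "u = x" "E y v"
        then have "{y, v} \<in> edge_set A (rel_on A E)" unfolding edge_set_def rel_on_def using uA xin by blast
        moreover have "\<rho> ` {y, v} = e" using e uA \<open>u = x\<close> unfolding \<rho>_def by auto
        ultimately show ?thesis by blast
      next
        assume "v = x" "E u y"
        then have "{u, y} \<in> edge_set A (rel_on A E)" unfolding edge_set_def rel_on_def using uA xin by blast
        moreover have "\<rho> ` {u, y} = e" using e uA \<open>v = x\<close> unfolding \<rho>_def by auto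
        ultimately show ?thesis by blast
      qed
    qed
    have finA: "finite (edge_set A (rel_on A E))" by (rule finite_edge_set) (use finV AV in \<open>meson finite_subset\<close>)
    have "card (edge_set MA ME) \<le> card ((\<lambda>e. \<rho> ` e) ` edge_set A (rel_on A E))"
      by (rule card_mono[OF finite_imageI[OF finA] sub])
    also have "\<dots> \<le> card (edge_set A (rel_on A E))" by (rule card_image_le[OF finA])
    finally show ?thesis using sep2_edges[OF sep] unfolding num_edges_def by simp
  qed
  obtain c where c: "okcol MA ME c (MA - {x})" using P[OF sgM connM nKM edM xM] by blast
  obtain p where p: "perm4 p" "p (c x) = 0" using norm1 okcol_colors[OF c xM] by blast
  define c' where "c' = p \<circ> c"
  have c': "okcol MA ME c' (MA - {x})" unfolding c'_def by (rule okcol_perm[OF c p(1)])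
  have c'x: "c' x = 0" using p unfolding c'_def by simp
  define d where "d z = c' (\<rho> z)" for z
  have "okcol A (rel_on A E) d (A - B)" unfolding okcol_def
  proof (intro conjI ballI)
    fix z assume "z \<in> A" then show "d z < 4" unfolding d_def using okcol_colors[OF c'] \<rho>M by blast
  next
    show "proper_coloring A (rel_on A E) d" unfolding proper_coloring_def
    proof (intro ballI impI)
      fix u v assume "u \<in> A" "v \<in> A" "rel_on A E u v"
      then have "ME (\<rho> u) (\<rho> v)" using key by blast
      then show "d u \<noteq> d v" using c' unfolding d_def okcol_def proper_coloring_def ME_def by auto
    qed
  next
    fix a assume a: "a \<in> A - B"
    have aM: "a \<in> MA - {x}" "\<rho> a = a" using a xin unfolding MA_def \<rho>_def by auto
    let ?N = "neighbors A (rel_on A E) a"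
    let ?NM = "neighbors MA ME a"
    have aE: "\<And>z. E a z \<Longrightarrow> z \<in> A"
    proof (rule ccontr)
      fix z assume az: "E a z" "z \<notin> A"
      then have "z \<in> B - A" using Ein sep unfolding separation_def by blast
      then show False using sep a az unfolding separation_def by blast
    qed
    have NM: "?NM = \<rho> ` ?N"
    proof
      show "\<rho> ` ?N \<subseteq> ?NM"
      proof
        fix s assume "s \<in> \<rho> ` ?N"
        then obtain z where z: "z \<in> ?N" "s = \<rho> z" by blast
        then have rz: "rel_on A E a z" "z \<in> A" unfolding neighbors_def by auto
        have "ME (\<rho> a) (\<rho> z)" using key rz(1) by blast
        then have "ME a s" using aM(2) z(2) by simp
        then show "s \<in> ?NM" unfolding neighbors_def ME_def by auto
      qed
      show "?NM \<subseteq> \<rho> ` ?N"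
      proof
        fix s assume "s \<in> ?NM"
        then have s: "s \<in> MA" "ME a s" unfolding neighbors_def by auto
        then have "E a s \<or> (s = x \<and> E a y)" using aM unfolding ME_def by auto
        then show "s \<in> \<rho> ` ?N"
        proof
          assume "E a s"
          then have "s \<in> ?N" using a aE unfolding neighbors_def rel_on_def by auto
          then show ?thesis using \<rho>id s by force
        next
          assume "s = x \<and> E a y"
          then have "y \<in> ?N" "\<rho> y = s" using a xin unfolding neighbors_def rel_on_def \<rho>_def by auto
          then show ?thesis by force
        qed
      qed
    qed
    have hp: "happy MA ME c' a" using c' aM unfolding okcol_def by blast
    show "happy A (rel_on A E) d a"
    proof (cases "card ?NM \<le> 1")
      case False
      then obtain s t where st: "s \<in> ?NM" "t \<in> ?NM" "c' s \<noteq> c' t" using hp unfolding happy_def by blast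
      then obtain s' t' where "s' \<in> ?N" "t' \<in> ?N" "s = \<rho> s'" "t = \<rho> t'" using NM by blast
      then show ?thesis using st unfolding happy_def d_def by blast
    next
      case True
      have "?N \<subseteq> A" unfolding neighbors_def by auto
      moreover have "finite A" using finV AV by (meson finite_subset)
      ultimately have finN: "finite ?N" by (rule finite_subset)
      have finNM: "finite ?NM" using NM finN by simp
      have one: "\<And>s t. s \<in> ?NM \<Longrightarrow> t \<in> ?NM \<Longrightarrow> s = t" using True card_le_Suc0_iff_eq[OF finNM] by auto
      show ?thesis
      proof (rule ccontr)
        assume "\<not> happy A (rel_on A E) d a"
        then have "\<not> card ?N \<le> 1" unfolding happy_def by simp
        then obtain u1 u2 where u: "u1 \<in> ?N" "u2 \<in> ?N" "u1 \<noteq> u2" using card_le_Suc0_iff_eq[OF finN] by auto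
        have "\<rho> u1 = \<rho> u2" using one u NM by blast
        then have u12: "{u1, u2} = {x, y}"
        proof -
          assume r: "\<rho> u1 = \<rho> u2"
          have "u1 = y \<or> u2 = y"
          proof (rule ccontr)
            assume "\<not> (u1 = y \<or> u2 = y)"
            then have "\<rho> u1 = u1" "\<rho> u2 = u2" unfolding \<rho>_def by auto
            then show False using r u(3) by simp
          qed
          then show ?thesis
          proof
            assume "u1 = y" then have "u2 \<noteq> y" "\<rho> u2 = x" using r u(3) unfolding \<rho>_def by auto
            then have "u2 = x" unfolding \<rho>_def by (simp split: if_splits)
            then show ?thesis using \<open>u1 = y\<close> by blast
          next
            assume "u2 = y" then have "u1 \<noteq> y" "\<rho> u1 = x" using r u(3) unfolding \<rho>_def by auto
            then have "u1 = x" unfolding \<rho>_def by (simp split: if_splits)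
            then show ?thesis using \<open>u2 = y\<close> by blast
          qed
        qed
        then have xyN: "x \<in> ?N" "y \<in> ?N" using u by auto
        have "\<forall>z. E a z \<longleftrightarrow> z = x \<or> z = y"
        proof (intro allI iffI)
          fix z assume az: "E a z"
          then have "z \<in> ?N" using a aE unfolding neighbors_def rel_on_def by auto
          then have "\<rho> z = \<rho> x" using one NM xyN by blast
          then have "\<rho> z = x" unfolding \<rho>_def using xny by simp
          then show "z = x \<or> z = y" unfolding \<rho>_def by (simp split: if_splits)
        next
          fix z assume "z = x \<or> z = y"
          then show "E a z" using xyN unfolding neighbors_def rel_on_def by auto
        qed
        then show False using noW[OF a] by blast
      qed
    qed
  qed
  moreover have "d x = 0" "d y = 0" using c'x xny unfolding d_def \<rho>_def by auto
  ultimately show ?thesis by blast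
qed

end

context mincex
begin

lemma caseIIb:
  assumes sep: "separation V E A B" and xy: "A \<inter> B = {x, y}" and xny: "x \<noteq> y" and nxy: "\<not> E x y"
    and noWA: "\<And>u. u \<in> A - B \<Longrightarrow> \<not> (\<forall>z. E u z \<longleftrightarrow> z = x \<or> z = y)"
    and noWB: "\<And>u. u \<in> B - A \<Longrightarrow> \<not> (\<forall>z. E u z \<longleftrightarrow> z = x \<or> z = y)"
  shows False
proof -
  have sepB: "separation V E B A" by (rule sep_sym[OF sep])
  have xyB: "B \<inter> A = {x, y}" using xy by blast
  have AV: "A \<subseteq> V" "B \<subseteq> V" using sep_sub[OF sep] by auto
  have xin: "x \<in> A" "y \<in> A" "x \<in> B" "y \<in> B" using xy by auto
  obtain d1 where d1: "okcol A (rel_on A E) d1 (A - B)" "d1 x = 0" "d1 y = 0"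
    using merge_side[OF sep xy xny nxy noWA] by blast
  obtain d2 where d2: "okcol B (rel_on B E) d2 (B - A)" "d2 x = 0" "d2 y = 0"
    using merge_side[OF sepB xyB xny nxy noWB] by blast
  obtain a0 where a0: "a0 \<in> A - B" "E x a0" using sep2_nbr[OF sep xy, of x] by auto
  obtain a1 where a1: "a1 \<in> A - B" "E y a1" using sep2_nbr[OF sep xy, of y] by auto
  obtain b0 where b0: "b0 \<in> B - A" "E x b0" using sep2_nbr[OF sepB xyB, of x] by auto
  obtain b1 where b1: "b1 \<in> B - A" "E y b1" using sep2_nbr[OF sepB xyB, of y] by auto
  have val: "f v \<in> {1, 2, 3}" if "okcol C (rel_on C E) f U" "s \<in> C" "v \<in> C" "E s v" "f s = 0" for f C U s v
  proof -
    have "f v < 4" using okcol_colors[OF that(1) that(3)] .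
    moreover have "f s \<noteq> f v" using okcol_proper[OF that(1) that(2,3,4)] .
    ultimately show ?thesis using that(5) by auto
  qed
  have v1: "d1 a0 \<in> {1,2,3}" "d1 a1 \<in> {1,2,3}"
    using val[OF d1(1) xin(1) _ a0(2) d1(2)] val[OF d1(1) xin(2) _ a1(2) d1(3)] a0 a1 by blast+
  have v2: "d2 b0 \<in> {1,2,3}" "d2 b1 \<in> {1,2,3}"
    using val[OF d2(1) xin(3) _ b0(2) d2(2)] val[OF d2(1) xin(4) _ b1(2) d2(3)] b0 b1 by blast+
  obtain s where s: "perm4 s" "s 0 = 0" "s (d2 b0) \<noteq> d1 a0" "s (d2 b1) \<noteq> d1 a1"
    using rot_ok[OF v2 v1] by blast
  define d2' where "d2' = s \<circ> d2"
  have d2': "okcol B (rel_on B E) d2' (B - A)" unfolding d2'_def by (rule okcol_perm[OF d2(1) s(1)])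
  have agree: "\<And>z. z \<in> A \<inter> B \<Longrightarrow> d1 z = d2' z" using xy d1 d2 s unfolding d2'_def by auto
  show False
  proof (rule glue[OF sep d1(1) d2' agree])
    fix t assume "t \<in> A \<inter> B"
    then have "t = x \<or> t = y" using xy by blast
    then show "happy V E (gl A d1 d2') t"
    proof
      assume tx: "t = x"
      have "gl A d1 d2' a0 = d1 a0" using a0 by (simp add: gl_A)
      moreover have "gl A d1 d2' b0 = s (d2 b0)" using b0 by (simp add: gl_B d2'_def)
      ultimately have "gl A d1 d2' a0 \<noteq> gl A d1 d2' b0" using s by simp
      then show ?thesis using happy_pair[of a0 V b0 E t] a0 b0 AV tx by blast
    next
      assume ty: "t = y"
      have "gl A d1 d2' a1 = d1 a1" using a1 by (simp add: gl_A)
      moreover have "gl A d1 d2' b1 = s (d2 b1)" using b1 by (simp add: gl_B d2'_def)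
      ultimately have "gl A d1 d2' a1 \<noteq> gl A d1 d2' b1" using s by simp
      then show ?thesis using happy_pair[of a1 V b1 E t] a1 b1 AV ty by blast
    qed
  qed
qed

lemma sep2_main:
  assumes sep: "separation V E A B" and c2: "card (A \<inter> B) = 2"
  shows "card (A - B) = 1 \<or> card (B - A) = 1"
proof (rule ccontr)
  assume n: "\<not> (card (A - B) = 1 \<or> card (B - A) = 1)"
  have sepB: "separation V E B A" by (rule sep_sym[OF sep])
  have AV: "A \<subseteq> V" "B \<subseteq> V" using sep_sub[OF sep] by auto
  have finAB: "finite (A - B)" "finite (B - A)" using finV AV by (meson finite_Diff finite_subset)+
  have neAB: "A - B \<noteq> {}" "B - A \<noteq> {}" using sep by (auto simp: separation_def)
  have cA: "card (A - B) \<ge> 2" using n finAB neAB card_gt_0_iff by (metis One_nat_def Suc_1 Suc_leI le_neq_implies_less not_less_eq_eq)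
  have cB: "card (B - A) \<ge> 2" using n finAB neAB card_gt_0_iff by (metis One_nat_def Suc_1 Suc_leI le_neq_implies_less not_less_eq_eq)
  obtain x y where xy: "A \<inter> B = {x, y}" "x \<noteq> y" using c2 by (meson card_2_iff)
  have xyB: "B \<inter> A = {x, y}" using xy by blast
  show False
  proof (cases "E x y")
    case True then show False using caseI[OF sep xy True] by blast
  next
    case nxy: False
    show False
    proof (cases "\<exists>w\<in>B - A. \<forall>z. E w z \<longleftrightarrow> z = x \<or> z = y")
      case True
      then obtain w where "w \<in> B - A" "\<And>z. E w z \<longleftrightarrow> z = x \<or> z = y" by blast
      then show False using caseIIa[OF sep xy cB] by blast
    next
      case noB: False
      show False
      proof (cases "\<exists>w\<in>A - B. \<forall>z. E w z \<longleftrightarrow> z = x \<or> z = y")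
        case True
        then obtain w where "w \<in> A - B" "\<And>z. E w z \<longleftrightarrow> z = x \<or> z = y" by blast
        then show False using caseIIa[OF sepB xyB xy(2) cA] by blast
      next
        case False
        then show False using caseIIb[OF sep xy nxy] noB by blast
      qed
    qed
  qed
qed

lemma final: "internally_k_connected 3 V E"
  unfolding internally_k_connected_def
proof (intro conjI allI impI)
  show "3 < card V" using card5 by simp
  show "k_connected (3 - 1) V E" unfolding k_connected_def
  proof (intro conjI allI impI)
    show "3 - 1 < card V" using card5 by simp
    fix X assume X: "X \<subseteq> V" "card X < 3 - 1"
    have finX: "finite X" using X finV by (meson finite_subset)
    have "card X = 0 \<or> card X = 1" using X by auto
    then show "connected_on (V - X) E"
    proof
      assume "card X = 0" then have "X = {}" using finX by simp
      then show ?thesis using connV by simp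
    next
      assume "card X = 1"
      then obtain v where "X = {v}" by (meson card_1_singletonE)
      then show ?thesis using conn_minus X by auto
    qed
  qed
  fix A B assume "separation V E A B \<and> card (A \<inter> B) = 3 - 1"
  then show "card (A - B) = 1 \<or> card (B - A) = 1" using sep2_main by simp
qed

end

theorem lemma3p2:
  fixes V :: "'a set" and E :: "'a \<Rightarrow> 'a \<Rightarrow> bool"
  assumes "simple_graph V E" and "connected_graph V E"
    and "\<not> has_K5_minor V E" and "\<not> iso_C5 V E"
    and "\<not> dynamically_4_colorable V E"
    and "\<And>(V' :: nat set) E'. simple_graph V' E' \<Longrightarrow> connected_graph V' E' \<Longrightarrow>
           \<not> has_K5_minor V' E' \<Longrightarrow> \<not> iso_C5 V' E' \<Longrightarrow>
           num_edges V' E' < num_edges V E \<Longrightarrow> dynamically_4_colorable V' E'"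
  shows "internally_k_connected 3 V E"
proof -
  interpret mincex V E using assms by unfold_locales
  show ?thesis by (rule final)
qed

end
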